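(* If $a(\check z),b(\check z)\in\mathrm{End}(V)\{\check z\}$ are mutually local, then for every $\check n\in\check{\mathbb K}$ $\zeta^{\tilde a\tilde b}\,b(\check z)_{(\check n)}a(\check z)=\sum_{\check i\in\mathbb N^2}(-1)^{n-\bar n+i+\bar i}\,\partial_{\check z}^{(\check i)}\big(a(\check z)_{(\check n+\check i)}b(\check z)\big)$, the sum on the right being finite.
   Context: $\mathbb K$ of characteristic $0$; super vector spaces, parity $\tilde a$, $\zeta=-1$. $\check z=(z,\bar z)$, $\check z^{\check n}=z^n\bar z^{\bar n}$, $1=(1,1)$; $\partial^{(n)}=\partial^n/n!$ for $n\in\mathbb N$, $0$ otherwise, $\partial_{\check z}^{(\check n)}=\partial_z^{(n)}\partial_{\bar z}^{(\bar n)}$. A field is an $\mathrm{End}(V)$-valued formal distribution (exponents in $\mathbb K$) giving a vertex series on each vector. $(\check z-\check w)^{\check h}=\sum_{\check i\in\mathbb N^2}(-1)^{i+\bar i}\binom hi\binom{\bar h}{\bar i}\check z^{\check h-\check i}\check w^{\check i}$; $\check{\mathbb K}=\{\check h:h-\bar h\in\mathbb Z\}$; $(\check z-\check w)^{\check h}_{w>z}=(-1)^{h-\bar h}(\check w-\check z)^{\check h}$. $a,b$ mutually local: there are fields $c^i(\check z,\check w)$ and $\check h_i\in\check{\mathbb K}$ with $a(\check z)b(\check w)=\sum_i(\check z-\check w)^{-\check h_i}c^i$ and $\zeta^{\tilde a\tilde b}b(\check w)a(\check z)=\sum_i(\check z-\check w)^{-\check h_i}_{w>z}c^i$. Products: if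 $a(\check z)b(\check w)=\sum_i(\check z-\check w)^{-\check h_i}c^i$ is an OPE (fields $c^i$, $\check h_i\in\mathbb K^2$), $a(\check w)_{(\check n)}b(\check w):=\sum_i\partial_{\check z}^{(\check h_i-1-\check n)}c^i(\check z,\check w)|_{\check z=\check w}$; this is independent of the OPE. *)

theory Defs
  imports Complex_Main "HOL-Library.Groups_Big_Fun"
begin

text \<open>
  Parities are booleans (False = even, True = odd).
  A pair z-check = (z, zbar) of exponents is an element of 'k * 'k.

  An End(V)-valued formal distribution in one variable z-check is represented by its
  coefficient function  a :: 'k*'k => 'v => 'v,  a p = coefficient of z^p zbar^pbar.
  In two variables (z-check, w-check): c p q = coefficient of z-check^p w-check^q.
\<close>

type_synonym ('k, 'v) fdist1 = "'k \<times> 'k \<Rightarrow> 'v \<Rightarrow> 'v"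
type_synonym ('k, 'v) fdist2 = "'k \<times> 'k \<Rightarrow> 'k \<times> 'k \<Rightarrow> 'v \<Rightarrow> 'v"

definition super_vs :: "('k::field \<Rightarrow> 'v::ab_group_add \<Rightarrow> 'v) \<Rightarrow> 'v set \<Rightarrow> 'v set \<Rightarrow> bool" where
  "super_vs sc V0 V1 \<longleftrightarrow> vector_space sc \<and> module.subspace sc V0 \<and> module.subspace sc V1
     \<and> (\<forall>v. \<exists>!xy. fst xy \<in> V0 \<and> snd xy \<in> V1 \<and> v = fst xy + snd xy)"

definition par_space :: "'v set \<Rightarrow> 'v set \<Rightarrow> bool \<Rightarrow> 'v set" where
  "par_space V0 V1 p = (if p then V1 else V0)"

definition zeta_pow :: "bool \<Rightarrow> bool \<Rightarrow> 'k::comm_ring_1" where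
  "zeta_pow pa pb = (-1) ^ (if pa \<and> pb then 1 else 0)"

definition padd :: "'k::ring_1 \<times> 'k \<Rightarrow> 'k \<times> 'k \<Rightarrow> 'k \<times> 'k" where
  "padd x y = (fst x + fst y, snd x + snd y)"
definition psub :: "'k::ring_1 \<times> 'k \<Rightarrow> 'k \<times> 'k \<Rightarrow> 'k \<times> 'k" where
  "psub x y = (fst x - fst y, snd x - snd y)"
definition pneg :: "'k::ring_1 \<times> 'k \<Rightarrow> 'k \<times> 'k" where
  "pneg x = (- fst x, - snd x)"
definition pnat :: "nat \<times> nat \<Rightarrow> 'k::ring_1 \<times> 'k" where
  "pnat i = (of_nat (fst i), of_nat (snd i))"

definition Kcheck :: "('k::ring_1 \<times> 'k) set" where
  "Kcheck = {h. fst h - snd h \<in> \<int>}"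

text \<open>The integer m with of_int m = x (unique in characteristic 0), and (-1)^x for x in Z.\<close>
definition int_part :: "'k::ring_char_0 \<Rightarrow> int" where
  "int_part x = (THE m. of_int m = x)"
definition neg1_pow :: "'k::{field_char_0} \<Rightarrow> 'k" where
  "neg1_pow x = (-1) powi (int_part x)"

definition nat_part :: "'k::semiring_char_0 \<Rightarrow> nat" where
  "nat_part x = (THE m. of_nat m = x)"

definition vertex_series1 :: "('k::ring_1 \<times> 'k \<Rightarrow> 'v::zero) \<Rightarrow> bool" where
  "vertex_series1 f \<longleftrightarrow> (\<exists>S. finite S \<and>
     (\<forall>p. f p \<noteq> 0 \<longrightarrow> (\<exists>s\<in>S. \<exists>i::nat\<times>nat. p = padd s (pnat i))))"

definition vertex_series2 :: "('k::ring_1 \<times> 'k \<Rightarrow> 'k \<times> 'k \<Rightarrow> 'v::zero) \<Rightarrow> bool" where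
  "vertex_series2 f \<longleftrightarrow> (\<exists>S. finite S \<and>
     (\<forall>p q. f p q \<noteq> 0 \<longrightarrow> (\<exists>s\<in>S. \<exists>i j::nat\<times>nat. p = padd (fst s) (pnat i) \<and> q = padd (snd s) (pnat j))))"

definition field1 :: "('k::field \<Rightarrow> 'v::ab_group_add \<Rightarrow> 'v) \<Rightarrow> ('k, 'v) fdist1 \<Rightarrow> bool" where
  "field1 sc a \<longleftrightarrow> (\<forall>p. Vector_Spaces.linear sc sc (a p)) \<and> (\<forall>v. vertex_series1 (\<lambda>p. a p v))"

definition field2 :: "('k::field \<Rightarrow> 'v::ab_group_add \<Rightarrow> 'v) \<Rightarrow> ('k, 'v) fdist2 \<Rightarrow> bool" where
  "field2 sc c \<longleftrightarrow> (\<forall>p q. Vector_Spaces.linear sc sc (c p q)) \<and> (\<forall>v. vertex_series2 (\<lambda>p q. c p q v))"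

definition homogeneous :: "'v set \<Rightarrow> 'v set \<Rightarrow> bool \<Rightarrow> ('k, 'v) fdist1 \<Rightarrow> bool" where
  "homogeneous V0 V1 pa a \<longleftrightarrow>
     (\<forall>p v q. v \<in> par_space V0 V1 q \<longrightarrow> a p v \<in> par_space V0 V1 (q \<noteq> pa))"

text \<open>(z-check - w-check)^h-check * c(z-check, w-check), expanded in nonnegative powers of w:
  (z-w)^h = sum_{i in N^2} (-1)^(i+ibar) binom(h,i) binom(hbar,ibar) z^(h-i) w^i.\<close>
definition expand_zw :: "('k::field_char_0 \<Rightarrow> 'v::ab_group_add \<Rightarrow> 'v) \<Rightarrow> 'k \<times> 'k \<Rightarrow> ('k, 'v) fdist2 \<Rightarrow> ('k, 'v) fdist2" where
  "expand_zw sc h c = (\<lambda>p q v. Sum_any (\<lambda>i::nat\<times>nat.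
      sc ((-1) ^ (fst i + snd i) * (fst h gchoose fst i) * (snd h gchoose snd i))
         (c (padd (psub p h) (pnat i)) (psub q (pnat i)) v)))"

text \<open>(z-check - w-check)^h-check_(w>z) * c = (-1)^(h-hbar) (w-check - z-check)^h-check * c,
  expanded in nonnegative powers of z (for h-check in K-check).\<close>
definition expand_wz :: "('k::field_char_0 \<Rightarrow> 'v::ab_group_add \<Rightarrow> 'v) \<Rightarrow> 'k \<times> 'k \<Rightarrow> ('k, 'v) fdist2 \<Rightarrow> ('k, 'v) fdist2" where
  "expand_wz sc h c = (\<lambda>p q v. Sum_any (\<lambda>i::nat\<times>nat.
      sc (neg1_pow (fst h - snd h) * (-1) ^ (fst i + snd i) * (fst h gchoose fst i) * (snd h gchoose snd i))
         (c (psub p (pnat i)) (padd (psub q h) (pnat i)) v)))"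

definition mutually_local :: "('k::field_char_0 \<Rightarrow> 'v::ab_group_add \<Rightarrow> 'v) \<Rightarrow> bool \<Rightarrow> bool \<Rightarrow> ('k, 'v) fdist1 \<Rightarrow> ('k, 'v) fdist1 \<Rightarrow> bool" where
  "mutually_local sc pa pb a b \<longleftrightarrow> (\<exists>(I::nat set) h c. finite I \<and>
     (\<forall>i\<in>I. field2 sc (c i) \<and> h i \<in> Kcheck) \<and>
     (\<forall>p q v. a p (b q v) = (\<Sum>i\<in>I. expand_zw sc (pneg (h i)) (c i) p q v)) \<and>
     (\<forall>p q v. sc (zeta_pow pa pb) (b q (a p v)) = (\<Sum>i\<in>I. expand_wz sc (pneg (h i)) (c i) p q v)))"

definition is_OPE :: "('k::field_char_0 \<Rightarrow> 'v::ab_group_add \<Rightarrow> 'v) \<Rightarrow> ('k, 'v) fdist1 \<Rightarrow> ('k, 'v) fdist1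
    \<Rightarrow> nat set \<Rightarrow> (nat \<Rightarrow> 'k \<times> 'k) \<Rightarrow> (nat \<Rightarrow> ('k, 'v) fdist2) \<Rightarrow> bool" where
  "is_OPE sc a b I h c \<longleftrightarrow> finite I \<and> (\<forall>i\<in>I. field2 sc (c i)) \<and>
     (\<forall>p q v. a p (b q v) = (\<Sum>i\<in>I. expand_zw sc (pneg (h i)) (c i) p q v))"

text \<open>Divided derivatives: d^(k) = d^k/k! for k in N, and 0 otherwise;
  d_z^(k) z^p = binom(p,k) z^(p-k).\<close>
definition ddiv :: "'k::field_char_0 \<Rightarrow> 'k \<Rightarrow> 'k" where
  "ddiv k p = (if k \<in> \<nat> then (p + k) gchoose (nat_part k) else 0)"

definition deriv2 :: "('k::field_char_0 \<Rightarrow> 'v::ab_group_add \<Rightarrow> 'v) \<Rightarrow> 'k \<times> 'k \<Rightarrow> ('k, 'v) fdist2 \<Rightarrow> ('k, 'v) fdist2" where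
  "deriv2 sc k c = (\<lambda>p q v. sc (ddiv (fst k) (fst p) * ddiv (snd k) (snd p)) (c (padd p k) q v))"

definition deriv1 :: "('k::field_char_0 \<Rightarrow> 'v::ab_group_add \<Rightarrow> 'v) \<Rightarrow> 'k \<times> 'k \<Rightarrow> ('k, 'v) fdist1 \<Rightarrow> ('k, 'v) fdist1" where
  "deriv1 sc k a = (\<lambda>p v. sc (ddiv (fst k) (fst p) * ddiv (snd k) (snd p)) (a (padd p k) v))"

text \<open>Restriction z-check = w-check:  coefficient of w-check^q is sum_p c_(p, q-p).\<close>
definition diag :: "('k::ring_1, 'v::ab_group_add) fdist2 \<Rightarrow> ('k, 'v) fdist1" where
  "diag c = (\<lambda>q v. Sum_any (\<lambda>p. c p (psub q p) v))"

text \<open>The n-check-th product  a(w)_(n) b(w) := sum_i d_z^(h_i - 1 - n) c^i(z,w)|_(z=w) for any OPE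
  (independent of the chosen OPE).\<close>
definition nprod :: "('k::field_char_0 \<Rightarrow> 'v::ab_group_add \<Rightarrow> 'v) \<Rightarrow> ('k, 'v) fdist1 \<Rightarrow> 'k \<times> 'k
    \<Rightarrow> ('k, 'v) fdist1 \<Rightarrow> ('k, 'v) fdist1" where
  "nprod sc a n b = (SOME d. \<exists>I h c. is_OPE sc a b I h c \<and>
      d = (\<lambda>q v. \<Sum>i\<in>I. diag (deriv2 sc (psub (psub (h i) (1, 1)) n) (c i)) q v))"

end

theory Submission
  imports Defs "HOL-Library.Product_Plus" "HOL-Computational_Algebra.Formal_Power_Series"
begin

lemma nat_part_of_nat [simp]: "nat_part (of_nat m :: 'k::semiring_char_0) = m"
  unfolding nat_part_def by (rule the_equality) auto

lemma of_nat_nat_part: "(x::'k::semiring_char_0) \<in> \<nat> \<Longrightarrow> of_nat (nat_part x) = x"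
  by (auto elim!: Nats_cases)

lemma int_part_of_int [simp]: "int_part (of_int m :: 'k::ring_char_0) = m"
  unfolding int_part_def by (rule the_equality) auto

lemma of_int_int_part: "(x::'k::ring_char_0) \<in> \<int> \<Longrightarrow> of_int (int_part x) = x"
  by (auto elim!: Ints_cases)

lemma padd_eq: "padd x y = x + y" by (simp add: padd_def prod_eq_iff)
lemma psub_eq: "psub x y = x - y" by (simp add: psub_def prod_eq_iff)
lemma pneg_eq: "pneg x = - x" by (simp add: pneg_def prod_eq_iff)
lemma fst_pnat [simp]: "fst (pnat i) = of_nat (fst i)" by (simp add: pnat_def)
lemma snd_pnat [simp]: "snd (pnat i) = of_nat (snd i)" by (simp add: pnat_def)

lemma Nats_diff_of_nat: "(of_nat N - of_nat i :: 'k::ring_char_0) \<in> \<nat> \<longleftrightarrow> i \<le> N"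
proof
  assume "of_nat N - of_nat i \<in> (\<nat>::'k set)"
  then obtain m where "of_nat N - of_nat i = (of_nat m :: 'k)" by (auto elim!: Nats_cases)
  then have "(of_nat N :: 'k) = of_nat (m + i)" by (simp add: algebra_simps)
  then have "N = m + i" using of_nat_eq_iff by blast
  then show "i \<le> N" by simp
next
  assume "i \<le> N" then show "of_nat N - of_nat i \<in> (\<nat>::'k set)"
    by (metis of_nat_in_Nats of_nat_diff)
qed

lemma Nats_minus_of_nat: "(t::'k::ring_char_0) \<in> \<nat> \<Longrightarrow> t - of_nat i \<in> \<nat> \<longleftrightarrow> i \<le> nat_part t"
  by (metis Nats_diff_of_nat of_nat_nat_part)

lemma Nats_not_minus: "(t::'k::ring_char_0) \<notin> \<nat> \<Longrightarrow> t - of_nat i \<notin> \<nat>"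
  by (metis Nats_add of_nat_in_Nats diff_add_cancel)

lemma Nats_plus1: "(t::'k::ring_char_0) + 1 \<in> \<nat> \<Longrightarrow> t \<notin> \<nat> \<Longrightarrow> t + 1 = 0"
proof -
  assume a: "t + 1 \<in> \<nat>" "t \<notin> \<nat>"
  then obtain k where k: "t + 1 = of_nat k" by (auto elim!: Nats_cases)
  show ?thesis
  proof (cases k)
    case 0 then show ?thesis using k by simp
  next
    case (Suc j) then have "t = of_nat j" using k by (simp add: algebra_simps)
    then show ?thesis using a by simp
  qed
qed

definition NB :: "'k::field_char_0 \<Rightarrow> 'k \<Rightarrow> 'k" where
  "NB s t = (if t \<in> \<nat> then (-1) ^ nat_part t * (s gchoose nat_part t) else 0)"

definition DB1 :: "'k::field_char_0 \<Rightarrow> 'k \<Rightarrow> 'k" where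
  "DB1 x k = (if k \<in> \<nat> then x gchoose nat_part k else 0)"

lemma NB_of_nat [simp]: "NB s (of_nat j) = (-1) ^ j * (s gchoose j)"
  by (simp add: NB_def)
lemma NB_0 [simp]: "NB s 0 = 1"
  using NB_of_nat[of s 0] by simp
lemma NB_notNats: "t \<notin> \<nat> \<Longrightarrow> NB s t = 0" by (simp add: NB_def)
lemma DB1_of_nat [simp]: "DB1 x (of_nat j) = x gchoose j"
  by (simp add: DB1_def)
lemma DB1_notNats: "t \<notin> \<nat> \<Longrightarrow> DB1 x t = 0" by (simp add: DB1_def)

lemma NB_step: "(t + 1) * NB s (t + 1) = (t - s) * NB s (t :: 'k::field_char_0)"
proof (cases "t \<in> \<nat>")
  case True
  then obtain j where t: "t = of_nat j" by (auto elim!: Nats_cases)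
  have "t + 1 = of_nat (Suc j)" using t by simp
  then have "(t + 1) * NB s (t + 1) = of_nat (Suc j) * ((-1) ^ Suc j * (s gchoose Suc j))"
    by (simp only: NB_of_nat)
  also have "\<dots> = - ((-1)^j * (of_nat (Suc j) * (s gchoose Suc j)))" by (simp add: algebra_simps)
  also have "of_nat (Suc j) * (s gchoose Suc j) = (s - of_nat j) * (s gchoose j)"
    by (metis gbinomial_absorption gbinomial_absorb_comp)
  finally show ?thesis using t by (simp add: algebra_simps)
next
  case False
  show ?thesis
  proof (cases "t + 1 \<in> \<nat>")
    case True then have "t + 1 = 0" using Nats_plus1 False by blast
    then show ?thesis using False by (simp add: NB_notNats)
  next
    case False2: False then show ?thesis using False by (simp add: NB_notNats)
  qed
qed

lemma gchoose_of_nat_big: "k < i \<Longrightarrow> ((of_nat k :: 'k::field_char_0) gchoose i) = 0"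
  by (metis binomial_eq_0 binomial_gbinomial of_nat_0)

lemma NB_vandermonde:
  "(\<Sum>i\<le>k. NB (of_nat k) (of_nat i) * NB u (t - of_nat i)) = NB (of_nat k + u) (t::'k::field_char_0)"
proof (cases "t \<in> \<nat>")
  case False
  then show ?thesis by (simp add: NB_notNats Nats_not_minus)
next
  case True
  then obtain N where t: "t = of_nat N" by (auto elim!: Nats_cases)
  have "(\<Sum>i\<le>k. NB (of_nat k) (of_nat i) * NB u (t - of_nat i))
      = (\<Sum>i\<in>{0..N}. NB (of_nat k) (of_nat i) * NB u (t - of_nat i))"
  proof (rule sum.mono_neutral_cong)
    show "finite {..k}" "finite {0..N}" by auto
    show "NB (of_nat k) (of_nat i) * NB u (t - of_nat i) = 0" if "i \<in> {..k} - {0..N}" for i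
      using that t by (simp add: NB_notNats Nats_diff_of_nat)
    show "NB (of_nat k) (of_nat i) * NB u (t - of_nat i) = 0" if "i \<in> {0..N} - {..k}" for i
      using that by (simp add: gchoose_of_nat_big)
  qed auto
  also have "\<dots> = (\<Sum>i\<in>{0..N}. (-1)^N * ((of_nat k gchoose i) * (u gchoose (N - i))))"
  proof (rule sum.cong)
    fix i assume i: "i \<in> {0..N}"
    then have "t - of_nat i = of_nat (N - i)" using t by (simp add: of_nat_diff)
    moreover have "(-1::'k)^i * (-1)^(N-i) = (-1)^N" using i by (simp flip: power_add)
    ultimately show "NB (of_nat k) (of_nat i) * NB u (t - of_nat i) = (-1)^N * ((of_nat k gchoose i) * (u gchoose (N - i)))"
      by (simp only: NB_of_nat) (metis (no_types, lifting) mult.assoc mult.left_commute)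
  qed simp
  also have "\<dots> = (-1)^N * (of_nat k + u gchoose N)"
    by (simp add: sum_distrib_left[symmetric] gbinomial_Vandermonde)
  finally show ?thesis using t by simp
qed

lemma binom_step_NB:
  "NB (of_nat (Suc k)) (of_nat (Suc i)) = - NB (of_nat k) (of_nat i) + NB (of_nat k) (of_nat (Suc i) :: 'k::field_char_0)"
proof -
  have e: "(of_nat (Suc k) :: 'k) gchoose Suc i = (of_nat k gchoose i) + (of_nat k gchoose Suc i)"
    using gbinomial_Suc_Suc[of "of_nat k :: 'k" i] by (simp add: add.commute)
  show ?thesis unfolding NB_of_nat e by (simp add: algebra_simps)
qed

lemma TM1_nat:
  "(\<Sum>i\<le>k. NB (of_nat k) (of_nat i) * ((x + of_nat k - of_nat i) gchoose N))
     = (if k \<le> N then x gchoose (N - k) else (0::'k::field_char_0))"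
proof (induction k arbitrary: x N)
  note NB_of_nat[simp del]
  case 0 then show ?case by simp
next
  case (Suc k)
  let ?g = "\<lambda>y. (y gchoose N) :: 'k"
  let ?NB = "\<lambda>a b. NB (of_nat a) (of_nat b) :: 'k"
  have "(\<Sum>i\<le>Suc k. ?NB (Suc k) i * ?g (x + of_nat (Suc k) - of_nat i))
      = ?NB (Suc k) 0 * ?g (x + of_nat (Suc k) - of_nat 0) + (\<Sum>i\<le>k. ?NB (Suc k) (Suc i) * ?g (x + of_nat (Suc k) - of_nat (Suc i)))"
    by (rule sum.atMost_Suc_shift)
  also have "?NB (Suc k) 0 * ?g (x + of_nat (Suc k) - of_nat 0) = ?g (x + 1 + of_nat k)"
    using NB_0[of "of_nat (Suc k) :: 'k"] by (simp add: algebra_simps)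
  also have "(\<Sum>i\<le>k. ?NB (Suc k) (Suc i) * ?g (x + of_nat (Suc k) - of_nat (Suc i)))
      = (\<Sum>i\<le>k. ?NB k (Suc i) * ?g ((x+1) + of_nat k - of_nat (Suc i)))
        - (\<Sum>i\<le>k. ?NB k i * ?g (x + of_nat k - of_nat i))"
    unfolding binom_step_NB sum_subtractf[symmetric] by (rule sum.cong, auto simp: algebra_simps)
  also have "?g (x + 1 + of_nat k) + ((\<Sum>i\<le>k. ?NB k (Suc i) * ?g ((x+1) + of_nat k - of_nat (Suc i)))
        - (\<Sum>i\<le>k. ?NB k i * ?g (x + of_nat k - of_nat i)))
      = (?NB k 0 * ?g ((x+1) + of_nat k - of_nat 0) + (\<Sum>i\<le>k. ?NB k (Suc i) * ?g ((x+1) + of_nat k - of_nat (Suc i))))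
        - (\<Sum>i\<le>k. ?NB k i * ?g (x + of_nat k - of_nat i))"
    using NB_0[of "of_nat k :: 'k"] by simp
  also have "?NB k 0 * ?g ((x+1) + of_nat k - of_nat 0) + (\<Sum>i\<le>k. ?NB k (Suc i) * ?g ((x+1) + of_nat k - of_nat (Suc i)))
      = (\<Sum>i\<le>Suc k. ?NB k i * ?g ((x+1) + of_nat k - of_nat i))"
    by (rule sum.atMost_Suc_shift[symmetric])
  also have "\<dots> = (\<Sum>i\<le>k. ?NB k i * ?g ((x+1) + of_nat k - of_nat i))"
    by (simp add: gchoose_of_nat_big NB_of_nat)
  finally have eq: "(\<Sum>i\<le>Suc k. NB (of_nat (Suc k)) (of_nat i) * ?g (x + of_nat (Suc k) - of_nat i))
     = (if k \<le> N then (x+1) gchoose (N - k) else 0) - (if k \<le> N then x gchoose (N - k) else 0)"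
    using Suc.IH[of "x+1" N] Suc.IH[of x N] by simp
  show ?case
  proof (cases "Suc k \<le> N")
    case True
    then have "N - k = Suc (N - Suc k)" by simp
    then show ?thesis using eq True gbinomial_Suc_Suc[of x "N - Suc k"] by simp
  next
    case False
    show ?thesis
    proof (cases "k = N")
      case True then show ?thesis using eq by simp
    next
      case False2: False then show ?thesis using eq False by simp
    qed
  qed
qed

lemma TM1:
  "(\<Sum>i\<le>k. NB (of_nat k) (of_nat i) * DB1 (x + of_nat k - of_nat i) (w + of_nat k)) = DB1 x (w::'k::field_char_0)"
proof (cases "w + of_nat k \<in> \<nat>")
  case False
  then have "w \<notin> \<nat>" by (metis Nats_add of_nat_in_Nats)
  then show ?thesis using False by (simp add: DB1_notNats)
next
  case True
  then obtain N where N: "w + of_nat k = of_nat N" by (auto elim!: Nats_cases)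
  then have w: "w = of_nat N - of_nat k" by (simp add: algebra_simps)
  have "(\<Sum>i\<le>k. NB (of_nat k) (of_nat i) * DB1 (x + of_nat k - of_nat i) (w + of_nat k))
     = (if k \<le> N then x gchoose (N - k) else 0)" using TM1_nat[of k x N] N by simp
  also have "\<dots> = DB1 x w"
    using w by (auto simp: Nats_diff_of_nat DB1_notNats of_nat_diff[symmetric] simp del: of_nat_diff)
  finally show ?thesis .
qed

lemma swap1D:
  "(\<Sum>j\<le>k. (-1)^j * ((p + of_nat j) gchoose j) * (y gchoose (k - j))) = (-1)^k * ((p + of_nat k - y) gchoose k :: 'k::field_char_0)"
proof -
  have "(\<Sum>j\<le>k. (-1)^j * ((p + of_nat j) gchoose j) * (y gchoose (k - j)))
      = (\<Sum>j\<in>{0..k}. ((-p-1) gchoose j) * (y gchoose (k - j)))"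
  proof (rule sum.cong)
    fix j
    have e0: "(-(p+1)) gchoose j = (-1)^j * ((p + 1 + of_nat j - 1) gchoose j)" by (rule gbinomial_minus)
    have a1: "-(p+1) = -p-1" and a2: "p + 1 + of_nat j - 1 = p + of_nat j" by simp_all
    have e: "(-p-1) gchoose j = (-1)^j * ((p + of_nat j) gchoose j)"
      using e0 unfolding a1 a2 .
    show "(-1)^j * ((p + of_nat j) gchoose j) * (y gchoose (k - j)) = ((-p-1) gchoose j) * (y gchoose (k - j))"
      unfolding e by simp
  qed auto
  also have "\<dots> = (-p-1 + y) gchoose k" by (rule gbinomial_Vandermonde)
  also have "\<dots> = (-1)^k * ((of_nat k - (-p-1+y) - 1) gchoose k)" by (rule gbinomial_negated_upper)
  finally show ?thesis by (simp add: algebra_simps)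
qed

definition natp :: "'k::semiring_1 \<times> 'k \<Rightarrow> bool" where
  "natp t \<longleftrightarrow> fst t \<in> \<nat> \<and> snd t \<in> \<nat>"
definition intp :: "'k::ring_1 \<times> 'k \<Rightarrow> bool" where
  "intp t \<longleftrightarrow> fst t \<in> \<int> \<and> snd t \<in> \<int>"
definition NB2 :: "'k::field_char_0 \<times> 'k \<Rightarrow> 'k \<times> 'k \<Rightarrow> 'k" where
  "NB2 s t = NB (fst s) (fst t) * NB (snd s) (snd t)"
definition DB2 :: "'k::field_char_0 \<times> 'k \<Rightarrow> 'k \<times> 'k \<Rightarrow> 'k" where
  "DB2 x k = DB1 (fst x) (fst k) * DB1 (snd x) (snd k)"
definition fsupp :: "('a \<Rightarrow> 'b::zero) \<Rightarrow> bool" where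
  "fsupp g \<longleftrightarrow> finite {x. g x \<noteq> 0}"

lemma pnat_Pair [simp]: "pnat (a, b) = (of_nat a, of_nat b)" by (simp add: pnat_def)
lemma natp_pnat [simp]: "natp (pnat i)" by (simp add: natp_def)
lemma pnat_inj [simp]: "(pnat i = (pnat j :: 'k::ring_char_0 \<times> 'k)) \<longleftrightarrow> i = j"
  by (simp add: pnat_def prod_eq_iff)
lemma natpE: "natp t \<Longrightarrow> t = pnat (nat_part (fst t), nat_part (snd t))"
  by (simp add: natp_def pnat_def of_nat_nat_part prod_eq_iff)
lemma natp_iff: "natp (t::'k::ring_char_0 \<times> 'k) \<longleftrightarrow> (\<exists>i. t = pnat i)"
proof
  assume "natp t" then show "\<exists>i. t = pnat i" by (intro exI[of _ "(nat_part (fst t), nat_part (snd t))"] natpE)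
next
  assume "\<exists>i. t = pnat i" then show "natp t" by (auto simp: natp_def)
qed
lemma natp_intp: "natp t \<Longrightarrow> intp (t::'k::ring_1 \<times> 'k)"
  unfolding natp_def intp_def using Nats_subset_Ints by blast
lemma intp_add: "intp a \<Longrightarrow> intp b \<Longrightarrow> intp (a + b)" by (simp add: intp_def)
lemma intp_diff: "intp a \<Longrightarrow> intp b \<Longrightarrow> intp (a - b)" by (simp add: intp_def)
lemma intp_minus: "intp a \<Longrightarrow> intp (- a)" by (simp add: intp_def)
lemma natp_add: "natp a \<Longrightarrow> natp b \<Longrightarrow> natp (a + b)" by (simp add: natp_def)
lemma intp_0 [simp]: "intp 0" by (simp add: intp_def)
lemma natp_0 [simp]: "natp 0" by (simp add: natp_def)

lemma NB2_0 [simp]: "NB2 s 0 = 1" by (simp add: NB2_def)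
lemma NB2_nz: "NB2 s t \<noteq> 0 \<Longrightarrow> natp t"
  by (auto simp: NB2_def natp_def NB_def split: if_splits)
lemma NB2_pnat: "NB2 s (pnat i) = NB (fst s) (of_nat (fst i)) * NB (snd s) (of_nat (snd i))"
  by (simp add: NB2_def)
lemma NB2_pnat_nz:
  assumes "NB2 (pnat k) t \<noteq> (0::'k::field_char_0)"
  shows "\<exists>i\<in>{..fst k}\<times>{..snd k}. t = pnat i"
proof -
  from NB2_nz[OF assms] obtain i where t: "t = pnat i" using natp_iff by blast
  have "fst i \<le> fst k" "snd i \<le> snd k"
    using assms t by (auto simp: NB2_def) (metis gchoose_of_nat_big not_le)+
  then show ?thesis using t by (intro bexI[of _ i]) (auto simp: mem_Times_iff)
qed

lemma grp_cancel1: "(a::'a::ab_group_add) - (a - c) = c" by (simp add: algebra_simps)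
lemma grp_cancel2: "(a::'a::ab_group_add) - y = c \<Longrightarrow> y = a - c" by (simp add: algebra_simps)

lemma Sum_any_image:
  assumes "finite A" "inj_on \<phi> A" "\<And>y. F y \<noteq> 0 \<Longrightarrow> y \<in> \<phi> ` A"
  shows "Sum_any F = (\<Sum>i\<in>A. F (\<phi> i))"
proof -
  have "Sum_any F = sum F (\<phi> ` A)"
  proof (rule Sum_any.expand_superset)
    show "finite (\<phi> ` A)" using assms(1) by simp
    show "{a. F a \<noteq> 0} \<subseteq> \<phi> ` A" using assms(3) by blast
  qed
  also have "\<dots> = (\<Sum>i\<in>A. F (\<phi> i))" using assms(2) by (simp add: sum.reindex)
  finally show ?thesis .
qed

lemma box_sum:
  fixes F :: "'k::field_char_0 \<times> 'k \<Rightarrow> 'k"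
  shows "Sum_any (\<lambda>y. F y * NB2 (pnat k) (x + pnat k - y))
    = (\<Sum>i\<in>{..fst k}\<times>{..snd k}. F (x + pnat k - pnat i) * NB2 (pnat k) (pnat i))"
proof -
  have "Sum_any (\<lambda>y. F y * NB2 (pnat k) (x + pnat k - y))
    = (\<Sum>i\<in>{..fst k}\<times>{..snd k}. F (x + pnat k - pnat i) * NB2 (pnat k) (x + pnat k - (x + pnat k - pnat i)))"
  proof (rule Sum_any_image)
    show "inj_on (\<lambda>i. x + pnat k - pnat i) ({..fst k}\<times>{..snd k})"
      by (auto simp: inj_on_def)
    fix y assume "F y * NB2 (pnat k) (x + pnat k - y) \<noteq> 0"
    then obtain i where "i\<in>{..fst k}\<times>{..snd k}" "x + pnat k - y = pnat i"
      using NB2_pnat_nz by (metis mult_eq_0_iff)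
    then show "y \<in> (\<lambda>i. x + pnat k - pnat i) ` ({..fst k}\<times>{..snd k})"
      by (intro image_eqI[of _ _ i]) (auto intro: grp_cancel2)
  qed auto
  then show ?thesis by (simp only: grp_cancel1)
qed

lemma box_sum_prod:
  fixes F1 F2 :: "'k::field_char_0 \<Rightarrow> 'k"
  shows "Sum_any (\<lambda>y. F1 (fst y) * F2 (snd y) * NB2 (pnat k) (x + pnat k - y))
    = (\<Sum>i\<le>fst k. F1 (fst x + of_nat (fst k) - of_nat i) * NB (of_nat (fst k)) (of_nat i))
      * (\<Sum>i\<le>snd k. F2 (snd x + of_nat (snd k) - of_nat i) * NB (of_nat (snd k)) (of_nat i))"
  unfolding box_sum sum_product sum.cartesian_product
proof (rule sum.cong)
  fix i assume "i \<in> {..fst k} \<times> {..snd k}"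
  obtain a b where i: "i = (a, b)" by (cases i)
  show "F1 (fst (x + pnat k - pnat i)) * F2 (snd (x + pnat k - pnat i)) * NB2 (pnat k) (pnat i) =
         (case i of (a, b) \<Rightarrow> F1 (fst x + of_nat (fst k) - of_nat a) * NB (of_nat (fst k)) (of_nat a) *
           (F2 (snd x + of_nat (snd k) - of_nat b) * NB (of_nat (snd k)) (of_nat b)))"
    unfolding i NB2_pnat by (simp del: NB_of_nat add: mult_ac)
qed simp
lemma XM_scalar:
  "Sum_any (\<lambda>y. NB2 (- (h + pnat k)) (y - p - (h + pnat k)) * NB2 (pnat k) (x + pnat k - y)) = NB2 (- h) (x - p - (h::'k::field_char_0 \<times> 'k))"
proof -
  have e: "(\<Sum>i\<le>kk. NB (- (hh + of_nat kk)) (xx + of_nat kk - of_nat i - pp - (hh + of_nat kk)) * NB (of_nat kk) (of_nat i))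
       = NB (- hh) (xx - pp - hh)" for kk and xx pp hh :: 'k
    using NB_vandermonde[of kk "- (hh + of_nat kk)" "xx - pp - hh"]
    by (simp add: algebra_simps)
  note bs = box_sum_prod[of "\<lambda>u. NB (- (fst h + of_nat (fst k))) (u - fst p - (fst h + of_nat (fst k)))"
                          "\<lambda>u. NB (- (snd h + of_nat (snd k))) (u - snd p - (snd h + of_nat (snd k)))" k x]
  show ?thesis
    apply (rule trans[OF trans[OF _ bs]])
     apply (simp add: NB2_def del: NB_of_nat)
    unfolding e by (simp add: NB2_def del: NB_of_nat)
qed

lemma TM_scalar:
  "Sum_any (\<lambda>y. DB2 y (z + pnat k) * NB2 (pnat k) (x + pnat k - y)) = DB2 x (z::'k::field_char_0 \<times> 'k)"
proof -
  have e: "(\<Sum>i\<le>kk. DB1 (xx + of_nat kk - of_nat i) (zz + of_nat kk) * NB (of_nat kk) (of_nat i))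
       = DB1 xx zz" for kk and xx zz :: 'k
    using TM1[of kk xx zz] by (simp add: algebra_simps)
  note bs = box_sum_prod[of "\<lambda>u. DB1 u (fst z + of_nat (fst k))" "\<lambda>u. DB1 u (snd z + of_nat (snd k))" k x]
  show ?thesis
    apply (rule trans[OF trans[OF _ bs]])
     apply (simp add: DB2_def del: NB_of_nat)
    unfolding e by (simp add: DB2_def del: NB_of_nat)
qed

locale kvs = vector_space sc for sc :: "'k::field_char_0 \<Rightarrow> 'v::ab_group_add \<Rightarrow> 'v"
begin

definition Xe :: "'k \<times> 'k \<Rightarrow> ('k \<times> 'k \<Rightarrow> 'v) \<Rightarrow> 'k \<times> 'k \<Rightarrow> 'v" where
  "Xe r g p = Sum_any (\<lambda>x. sc (NB2 (- r) (x - p - r)) (g x))"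
definition Te :: "'k \<times> 'k \<Rightarrow> ('k \<times> 'k \<Rightarrow> 'v) \<Rightarrow> 'v" where
  "Te k g = Sum_any (\<lambda>x. sc (DB2 x k) (g x))"
definition Mul :: "nat \<times> nat \<Rightarrow> ('k \<times> 'k \<Rightarrow> 'v) \<Rightarrow> 'k \<times> 'k \<Rightarrow> 'v" where
  "Mul k g y = Sum_any (\<lambda>x. sc (NB2 (pnat k) (x + pnat k - y)) (g x))"

lemma SA_sc:
  assumes "finite S" "{x. g x \<noteq> 0} \<subseteq> S"
  shows "Sum_any (\<lambda>x. sc (f x) (g x)) = (\<Sum>x\<in>S. sc (f x) (g x))"
  using assms by (intro Sum_any.expand_superset) auto

lemma Mul_supp:
  assumes "Mul k g y \<noteq> 0"
  shows "\<exists>x i. g x \<noteq> 0 \<and> i \<in> {..fst k}\<times>{..snd k} \<and> y = x + pnat k - pnat i"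
proof -
  from assms obtain x where "sc (NB2 (pnat k) (x + pnat k - y)) (g x) \<noteq> 0"
    unfolding Mul_def using Sum_any.not_neutral_obtains_not_neutral by blast
  then have "g x \<noteq> 0" "NB2 (pnat k) (x + pnat k - y) \<noteq> 0" by auto
  then obtain i where "i \<in> {..fst k}\<times>{..snd k}" "x + pnat k - y = pnat i" using NB2_pnat_nz by blast
  then show ?thesis using \<open>g x \<noteq> 0\<close> by (intro exI[of _ x] exI[of _ i]) (auto intro: grp_cancel2)
qed

definition boxim :: "nat \<times> nat \<Rightarrow> ('k \<times> 'k) set \<Rightarrow> ('k \<times> 'k) set" where
  "boxim k S = (\<lambda>(x, i). x + pnat k - pnat i) ` (S \<times> ({..fst k}\<times>{..snd k}))"

lemma boxim_finite: "finite S \<Longrightarrow> finite (boxim k S)"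
  unfolding boxim_def by auto

lemma Mul_supp_sub: "{y. Mul k g y \<noteq> 0} \<subseteq> boxim k {x. g x \<noteq> 0}"
proof
  fix y assume "y \<in> {y. Mul k g y \<noteq> 0}"
  then obtain x i where xi: "g x \<noteq> 0" "i \<in> {..fst k}\<times>{..snd k}" "y = x + pnat k - pnat i"
    using Mul_supp by blast
  show "y \<in> boxim k {x. g x \<noteq> 0}" unfolding boxim_def
    by (rule image_eqI[of _ _ "(x, i)"]) (use xi in auto)
qed

lemma Mul_fsupp: "fsupp g \<Longrightarrow> fsupp (Mul k g)"
  unfolding fsupp_def using Mul_supp_sub boxim_finite finite_subset by metis

lemma Mul_pair:
  assumes "fsupp g"
  shows "Sum_any (\<lambda>y. sc (A y) (Mul k g y))
       = Sum_any (\<lambda>x. sc (Sum_any (\<lambda>y. A y * NB2 (pnat k) (x + pnat k - y))) (g x))"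
proof -
  let ?S = "{x. g x \<noteq> 0}"
  let ?S' = "boxim k ?S"
  have fS: "finite ?S" using assms by (simp add: fsupp_def)
  have fS': "finite ?S'" using fS by (rule boxim_finite)
  have "Sum_any (\<lambda>y. sc (A y) (Mul k g y)) = (\<Sum>y\<in>?S'. sc (A y) (Mul k g y))"
    using fS' Mul_supp_sub by (rule SA_sc)
  also have "\<dots> = (\<Sum>y\<in>?S'. \<Sum>x\<in>?S. sc (A y * NB2 (pnat k) (x + pnat k - y)) (g x))"
    unfolding Mul_def SA_sc[OF fS subset_refl] by (simp add: scale_sum_right)
  also have "\<dots> = (\<Sum>x\<in>?S. \<Sum>y\<in>?S'. sc (A y * NB2 (pnat k) (x + pnat k - y)) (g x))"
    by (rule sum.swap)
  also have "\<dots> = (\<Sum>x\<in>?S. sc (Sum_any (\<lambda>y. A y * NB2 (pnat k) (x + pnat k - y))) (g x))"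
  proof (rule sum.cong)
    fix x assume x: "x \<in> ?S"
    have "Sum_any (\<lambda>y. A y * NB2 (pnat k) (x + pnat k - y)) = (\<Sum>y\<in>?S'. A y * NB2 (pnat k) (x + pnat k - y))"
    proof (rule Sum_any.expand_superset[OF fS'], safe)
      fix y assume "A y * NB2 (pnat k) (x + pnat k - y) \<noteq> 0"
      then obtain i where "i \<in> {..fst k}\<times>{..snd k}" "x + pnat k - y = pnat i"
        using NB2_pnat_nz by (metis mult_eq_0_iff)
      then show "y \<in> ?S'" using x unfolding boxim_def
        by (intro image_eqI[of _ _ "(x, i)"]) (auto intro: grp_cancel2)
    qed
    then show "(\<Sum>y\<in>?S'. sc (A y * NB2 (pnat k) (x + pnat k - y)) (g x))
        = sc (Sum_any (\<lambda>y. A y * NB2 (pnat k) (x + pnat k - y))) (g x)"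
      by (simp add: scale_sum_left)
  qed simp
  also have "\<dots> = Sum_any (\<lambda>x. sc (Sum_any (\<lambda>y. A y * NB2 (pnat k) (x + pnat k - y))) (g x))"
    using fS by (rule SA_sc[symmetric]) simp
  finally show ?thesis .
qed

lemma XM:
  assumes "fsupp g"
  shows "Xe (h + pnat k) (Mul k g) p = Xe h g p"
proof -
  have "Xe (h + pnat k) (Mul k g) p
      = Sum_any (\<lambda>x. sc (Sum_any (\<lambda>y. NB2 (- (h + pnat k)) (y - p - (h + pnat k)) * NB2 (pnat k) (x + pnat k - y))) (g x))"
    unfolding Xe_def by (rule Mul_pair[OF assms])
  also have "\<dots> = Xe h g p"
    unfolding Xe_def XM_scalar ..
  finally show ?thesis .
qed

lemma TM:
  assumes "fsupp g"
  shows "Te (z + pnat k) (Mul k g) = Te z g"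
proof -
  have "Te (z + pnat k) (Mul k g)
      = Sum_any (\<lambda>x. sc (Sum_any (\<lambda>y. DB2 y (z + pnat k) * NB2 (pnat k) (x + pnat k - y))) (g x))"
    unfolding Te_def by (rule Mul_pair[OF assms])
  also have "\<dots> = Te z g"
    unfolding Te_def TM_scalar ..
  finally show ?thesis .
qed

end

definition cmp :: "bool \<Rightarrow> 'k \<times> 'k \<Rightarrow> 'k" where
  "cmp c x = (if c then snd x else fst x)"
definition ev :: "bool \<Rightarrow> 'k::zero_neq_one \<times> 'k" where
  "ev c = (if c then (0, 1) else (1, 0))"

lemma cmp_add [simp]: "cmp c (x + y) = cmp c x + cmp c (y::'k::ab_group_add \<times> 'k)" by (simp add: cmp_def)
lemma cmp_diff [simp]: "cmp c (x - y) = cmp c x - cmp c (y::'k::ab_group_add \<times> 'k)" by (simp add: cmp_def)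
lemma cmp_minus [simp]: "cmp c (- x) = - cmp c (x::'k::ab_group_add \<times> 'k)" by (simp add: cmp_def)
lemma cmp_ev [simp]: "cmp c' (ev c :: 'k::{ab_group_add,zero_neq_one} \<times> 'k) = (if c' = c then 1 else 0)"
  by (simp add: cmp_def ev_def)
lemma cmp_False [simp]: "cmp False x = fst x" and cmp_True [simp]: "cmp True x = snd x"
  by (simp_all add: cmp_def)

lemma NB2_cmp: "NB2 s t = NB (cmp c s) (cmp c t) * NB (cmp (\<not>c) s) (cmp (\<not>c) t)"
  by (cases c) (simp_all add: NB2_def)

lemma natp_cmp: "natp t \<Longrightarrow> cmp c t \<in> \<nat>" by (cases c) (simp_all add: natp_def)
lemma intp_cmp: "intp t \<Longrightarrow> cmp c t \<in> \<int>" by (cases c) (simp_all add: intp_def)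

lemma natp_antisym: "natp (a::'k::ring_char_0 \<times> 'k) \<Longrightarrow> natp (- a) \<Longrightarrow> a = 0"
proof -
  have *: "x = 0" if "x \<in> \<nat>" "-x \<in> \<nat>" for x :: 'k
  proof -
    from that(1) obtain m where m: "x = of_nat m" by (rule Nats_cases)
    from that(2) obtain n where n: "-x = of_nat n" by (rule Nats_cases)
    have "of_nat (m + n) = (0::'k)" using m n by (metis add.right_inverse of_nat_add)
    then have "m = 0" by (metis add_is_0 of_nat_eq_0_iff)
    then show ?thesis using \<open>x = of_nat m\<close> by simp
  qed
  assume "natp a" "natp (- a)"
  then show ?thesis using * by (simp add: natp_def prod_eq_iff)
qed

lemma grp1: "(x::'a::ab_group_add) - (p - e) - r = x + e - p - r" by (simp add: algebra_simps)
lemma grp2: "(x::'a::ab_group_add) - r - b = (x - p - r) + (p - b)" by (simp add: algebra_simps)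
lemma grp3: "(p::'a::ab_group_add) - b = (x - r - b) - (x - p - r)" by (simp add: algebra_simps)
lemma grp4: "(x::'a::ab_group_add) - (x0 - r) - r = x - x0" by (simp add: algebra_simps)
lemma grp5: "(x::'a::ab_group_add) + e - e = x" by simp

context kvs
begin

definition CF :: "('k \<times> 'k \<Rightarrow> 'k) \<Rightarrow> ('k \<times> 'k \<Rightarrow> 'v) \<Rightarrow> 'v" where
  "CF f g = Sum_any (\<lambda>x. sc (f x) (g x))"

lemma CF_expand: "fsupp g \<Longrightarrow> CF f g = (\<Sum>x\<in>{x. g x \<noteq> 0}. sc (f x) (g x))"
  unfolding CF_def fsupp_def by (rule SA_sc) auto

lemma CF_scale: "fsupp g \<Longrightarrow> sc a (CF f g) = CF (\<lambda>x. a * f x) g"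
  by (simp add: CF_expand scale_sum_right)

lemma CF_add: "fsupp g \<Longrightarrow> CF f g + CF f' g = CF (\<lambda>x. f x + f' x) g"
  by (simp add: CF_expand sum.distrib[symmetric] scale_left_distrib)

lemma CF_diff: "fsupp g \<Longrightarrow> CF f g - CF f' g = CF (\<lambda>x. f x - f' x) g"
  by (simp add: CF_expand sum_subtractf[symmetric] scale_left_diff_distrib)

lemma CF_cong: "(\<And>x. g x \<noteq> 0 \<Longrightarrow> f x = f' x) \<Longrightarrow> CF f g = CF f' g"
  unfolding CF_def by (rule Sum_any.cong) (metis scale_zero_right)

lemma CF_shift:
  fixes e :: "'k \<times> 'k"
  shows "Sum_any (\<lambda>y. sc (f y) (g (y - e))) = CF (\<lambda>x. f (x + e)) g"
  unfolding CF_def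
proof (rule Sum_any.reindex_cong[of "\<lambda>x. x + e"])
  show "bij (\<lambda>x::'k\<times>'k. x + e)"
    by (rule bij_betw_byWitness[of _ "\<lambda>x. x - e"]) auto
qed (simp add: fun_eq_iff)

lemma Xe_CF: "Xe r g p = CF (\<lambda>x. NB2 (- r) (x - p - r)) g"
  unfolding Xe_def CF_def ..

lemma fsupp_shift: "fsupp (g :: 'k \<times> 'k \<Rightarrow> 'v) \<Longrightarrow> fsupp (\<lambda>y. g (y - e))"
proof -
  assume "fsupp g"
  have "{y. g (y - e) \<noteq> 0} \<subseteq> (\<lambda>x. x + e) ` {x. g x \<noteq> 0}"
  proof
    fix y assume "y \<in> {y. g (y - e) \<noteq> 0}"
    then show "y \<in> (\<lambda>x. x + e) ` {x. g x \<noteq> 0}" by (intro image_eqI[of _ _ "y - e"]) auto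
  qed
  then show ?thesis using \<open>fsupp g\<close> unfolding fsupp_def by (meson finite_imageI finite_subset)
qed

lemma fsupp_add: "fsupp (g :: 'a \<Rightarrow> 'v) \<Longrightarrow> fsupp g' \<Longrightarrow> fsupp (\<lambda>x. g x + g' x)"
  unfolding fsupp_def by (rule finite_subset[of _ "{x. g x \<noteq> 0} \<union> {x. g' x \<noteq> 0}"]) auto

lemma fsupp_scale: "fsupp (g :: 'a \<Rightarrow> 'v) \<Longrightarrow> fsupp (\<lambda>x. sc (f x) (g x))"
  unfolding fsupp_def by (rule finite_subset[of _ "{x. g x \<noteq> 0}"]) auto

lemma fsupp_sum: "finite L \<Longrightarrow> (\<And>l. l \<in> L \<Longrightarrow> fsupp (g l :: 'a \<Rightarrow> 'v)) \<Longrightarrow> fsupp (\<lambda>x. \<Sum>l\<in>L. g l x)"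
proof (induction L rule: finite_induct)
  case empty then show ?case by (simp add: fsupp_def)
next
  case (insert a F) then show ?case by (simp add: fsupp_add)
qed

lemma fsupp_zero [simp]: "fsupp (\<lambda>x::'a. 0::'v)" by (simp add: fsupp_def)

definition th :: "'k \<times> 'k \<Rightarrow> bool \<Rightarrow> 'k \<Rightarrow> ('k \<times> 'k \<Rightarrow> 'v) \<Rightarrow> 'k \<times> 'k \<Rightarrow> 'v" where
  "th b c l Y p = sc (cmp c p - cmp c b - l) (Y p) - sc (cmp c p - 1 - cmp c b) (Y (p - ev c))"

definition ps :: "'k \<times> 'k \<Rightarrow> bool \<Rightarrow> 'k \<Rightarrow> 'k \<times> 'k \<Rightarrow> ('k \<times> 'k \<Rightarrow> 'v) \<Rightarrow> 'k \<times> 'k \<Rightarrow> 'v" where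
  "ps b c l r g y = sc (cmp c b + cmp c r - cmp c y + 1) (g (y - ev c)) + sc (cmp c y - cmp c b - l) (g y)"

lemma ps_fsupp: "fsupp g \<Longrightarrow> fsupp (ps b c l r g)"
  unfolding ps_def by (intro fsupp_add fsupp_scale fsupp_shift)

lemma th_scalar:
  "(cmp c p - cmp c b - l) * NB2 (- r) (x - p - r) - (cmp c p - 1 - cmp c b) * NB2 (- r) (x + ev c - p - r)
   = NB2 (- r) (x + ev c - p - r) * (cmp c b + cmp c r - cmp c (x + ev c) + 1)
     + NB2 (- r) (x - p - r) * (cmp c x - cmp c b - l)"
proof -
  define t where "t = cmp c x - cmp c p - cmp c r"
  define Q where "Q = NB (cmp (\<not>c) (- r)) (cmp (\<not>c) (x - p - r))"
  define N0 where "N0 = NB (- cmp c r) t"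
  define N1 where "N1 = NB (- cmp c r) (t + 1)"
  have e1: "cmp c (x + ev c - p - r) = t + 1" by (simp add: t_def)
  have e2: "cmp (\<not>c) (x + ev c - p - r) = cmp (\<not>c) (x - p - r)" by simp
  have st: "(t + 1) * N1 = (t - (- cmp c r)) * N0" unfolding N0_def N1_def by (rule NB_step)
  have A: "NB2 (- r) (x - p - r) = N0 * Q"
    unfolding N0_def Q_def t_def by (subst NB2_cmp[of _ _ c]) simp
  have B: "NB2 (- r) (x + ev c - p - r) = N1 * Q"
    unfolding N1_def Q_def by (subst NB2_cmp[of _ _ c]) (simp only: e1 e2 cmp_minus)
  have C: "cmp c (x + ev c) = cmp c x + 1" by simp
  have D: "(cmp c p - cmp c b - l) * (N0 * Q) - (cmp c p - 1 - cmp c b) * (N1 * Q)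
     - (N1 * Q * (cmp c b + cmp c r - (cmp c x + 1) + 1) + N0 * Q * (cmp c x - cmp c b - l))
     = Q * ((t + 1) * N1 - (t - (- cmp c r)) * N0)"
    unfolding t_def by (simp add: algebra_simps)
  show ?thesis unfolding A B C using D st by simp
qed

lemma th_X:
  assumes "fsupp g"
  shows "th b c l (Xe r g) p = Xe r (ps b c l r g) p"
proof -
  let ?N = "\<lambda>x. NB2 (- r) (x - p - r)"
  have "th b c l (Xe r g) p = sc (cmp c p - cmp c b - l) (CF ?N g) - sc (cmp c p - 1 - cmp c b) (CF (\<lambda>x. NB2 (- r) (x - (p - ev c) - r)) g)"
    unfolding th_def Xe_CF ..
  also have "\<dots> = CF (\<lambda>x. (cmp c p - cmp c b - l) * ?N x - (cmp c p - 1 - cmp c b) * NB2 (- r) (x - (p - ev c) - r)) g"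
    by (simp only: CF_scale[OF assms] CF_diff[OF assms])
  also have "\<dots> = CF (\<lambda>x. NB2 (- r) (x + ev c - p - r) * (cmp c b + cmp c r - cmp c (x + ev c) + 1)
     + ?N x * (cmp c x - cmp c b - l)) g"
    by (rule CF_cong) (simp only: grp1 th_scalar)
  also have "\<dots> = CF (\<lambda>x. ?N (x + ev c) * (cmp c b + cmp c r - cmp c (x + ev c) + 1)) g + CF (\<lambda>x. ?N x * (cmp c x - cmp c b - l)) g"
    by (simp only: CF_add[OF assms])
  also have "CF (\<lambda>x. ?N (x + ev c) * (cmp c b + cmp c r - cmp c (x + ev c) + 1)) g
      = Sum_any (\<lambda>y. sc (?N y * (cmp c b + cmp c r - cmp c y + 1)) (g (y - ev c)))"
    by (rule CF_shift[symmetric])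
  also have "CF (\<lambda>x. ?N x * (cmp c x - cmp c b - l)) g = Sum_any (\<lambda>y. sc (?N y * (cmp c y - cmp c b - l)) (g y))"
    unfolding CF_def ..
  also have "Sum_any (\<lambda>y. sc (?N y * (cmp c b + cmp c r - cmp c y + 1)) (g (y - ev c))) + Sum_any (\<lambda>y. sc (?N y * (cmp c y - cmp c b - l)) (g y))
     = Sum_any (\<lambda>y. sc (?N y * (cmp c b + cmp c r - cmp c y + 1)) (g (y - ev c)) + sc (?N y * (cmp c y - cmp c b - l)) (g y))"
  proof (rule Sum_any.distrib[symmetric])
    have f1: "fsupp (\<lambda>y. g (y - ev c))" by (rule fsupp_shift[OF assms])
    show "finite {y. sc (?N y * (cmp c b + cmp c r - cmp c y + 1)) (g (y - ev c)) \<noteq> 0}"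
      using fsupp_scale[OF f1, of "\<lambda>y. ?N y * (cmp c b + cmp c r - cmp c y + 1)"] unfolding fsupp_def by simp
    show "finite {y. sc (?N y * (cmp c y - cmp c b - l)) (g y) \<noteq> 0}"
      using fsupp_scale[OF assms, of "\<lambda>y. ?N y * (cmp c y - cmp c b - l)"] unfolding fsupp_def by simp
  qed
  also have "\<dots> = Xe r (ps b c l r g) p"
    unfolding Xe_def ps_def by (simp only: scale_right_distrib scale_scale)
  finally show ?thesis .
qed

end

fun blk :: "bool \<Rightarrow> 'k::ring_1 \<Rightarrow> nat \<Rightarrow> (bool \<times> 'k) list" where
  "blk c l0 0 = []"
| "blk c l0 (Suc J) = (c, l0 - of_nat J) # blk c l0 J"

lemma blk_set: "(c', l) \<in> set (blk c l0 J) \<Longrightarrow> c' = c \<and> (\<exists>j. l = l0 - of_nat j)"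
  by (induction J) auto

context kvs
begin

fun Th :: "'k \<times> 'k \<Rightarrow> (bool \<times> 'k) list \<Rightarrow> ('k \<times> 'k \<Rightarrow> 'v) \<Rightarrow> 'k \<times> 'k \<Rightarrow> 'v" where
  "Th b [] Y = Y"
| "Th b ((c, l) # ops) Y = Th b ops (th b c l Y)"

fun Ps :: "'k \<times> 'k \<Rightarrow> 'k \<times> 'k \<Rightarrow> (bool \<times> 'k) list \<Rightarrow> ('k \<times> 'k \<Rightarrow> 'v) \<Rightarrow> 'k \<times> 'k \<Rightarrow> 'v" where
  "Ps b r [] g = g"
| "Ps b r ((c, l) # ops) g = Ps b r ops (ps b c l r g)"

lemma th_add: "th b c l (\<lambda>p. Y p + Z p) = (\<lambda>p. th b c l Y p + th b c l Z p)"
  by (simp add: th_def fun_eq_iff scale_right_distrib algebra_simps)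

lemma th_sum: "th b c l (\<lambda>p. \<Sum>i\<in>L. Y i p) = (\<lambda>p. \<Sum>i\<in>L. th b c l (Y i) p)"
  by (simp add: th_def fun_eq_iff scale_sum_right sum_subtractf)

lemma Th_add: "Th b ops (\<lambda>p. Y p + Z p) = (\<lambda>p. Th b ops Y p + Th b ops Z p)"
  by (induction ops arbitrary: Y Z) (auto simp: th_add)

lemma Th_sum: "Th b ops (\<lambda>p. \<Sum>i\<in>L. Y i p) = (\<lambda>p. \<Sum>i\<in>L. Th b ops (Y i) p)"
  by (induction ops arbitrary: Y) (auto simp: th_sum)

lemma Th_zero: "Th b ops (\<lambda>p. 0) = (\<lambda>p. 0)"
  using Th_sum[of b ops "\<lambda>i p. 0" "{}"] by simp

lemma Ps_fsupp: "fsupp g \<Longrightarrow> fsupp (Ps b r ops g)"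
  by (induction ops arbitrary: g) (auto simp: ps_fsupp)

lemma Th_X: "fsupp g \<Longrightarrow> Th b ops (Xe r g) = Xe r (Ps b r ops g)"
proof (induction ops arbitrary: g)
  case Nil then show ?case by simp
next
  case (Cons a ops)
  obtain c l where a: "a = (c, l)" by (cases a)
  have "th b c l (Xe r g) = Xe r (ps b c l r g)" using th_X[OF Cons.prems] by (simp add: fun_eq_iff)
  then show ?case using a Cons.IH[OF ps_fsupp[OF Cons.prems]] by simp
qed

lemma ps_zero: "ps b c l r (\<lambda>x. 0) = (\<lambda>x. 0)" by (simp add: ps_def fun_eq_iff)
lemma Ps_zero: "Ps b r ops (\<lambda>x. 0) = (\<lambda>x. 0)"
  by (induction ops) (auto simp: ps_zero)

lemma Ps_append: "Ps b r (o1 @ o2) g = Ps b r o2 (Ps b r o1 g)"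
  by (induction o1 arbitrary: g) auto

lemma Xe_zero: "Xe r (\<lambda>x. 0) p = 0" by (simp add: Xe_def)

definition Sd :: "'k \<times> 'k \<Rightarrow> bool \<Rightarrow> 'k \<times> 'k \<Rightarrow> nat \<Rightarrow> ('k \<times> 'k \<Rightarrow> 'v) \<Rightarrow> bool" where
  "Sd b c r J g \<longleftrightarrow> (\<forall>x. g x \<noteq> 0 \<longrightarrow> (\<exists>j<J. cmp c b + cmp c r - cmp c x = of_nat j))"
definition Sinf :: "'k \<times> 'k \<Rightarrow> bool \<Rightarrow> 'k \<times> 'k \<Rightarrow> ('k \<times> 'k \<Rightarrow> 'v) \<Rightarrow> bool" where
  "Sinf b c r g \<longleftrightarrow> (\<forall>x. g x \<noteq> 0 \<longrightarrow> cmp c b + cmp c r - cmp c x \<in> \<nat>)"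

lemma ps_nz:
  assumes "ps b c l r g y \<noteq> 0"
  shows "(cmp c b + cmp c r - cmp c y + 1 \<noteq> 0 \<and> g (y - ev c) \<noteq> 0) \<or> (cmp c y - cmp c b - l \<noteq> 0 \<and> g y \<noteq> 0)"
  using assms unfolding ps_def by (metis add.right_neutral add_0 scale_eq_0_iff)

lemma cmp_shift: "cmp c' ((y::'k \<times> 'k) - ev c) = (if c' = c then cmp c' y - 1 else cmp c' y)"
  by (cases c; cases c') (simp_all add: cmp_def ev_def)

lemma ps_Sd_pres:
  assumes "Sd b c r J g" shows "Sd b c r J (ps b c' l r g)"
  unfolding Sd_def
proof (intro allI impI)
  fix y assume "ps b c' l r g y \<noteq> 0"
  then consider "cmp c' b + cmp c' r - cmp c' y + 1 \<noteq> 0" "g (y - ev c') \<noteq> 0" | "g y \<noteq> 0"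
    using ps_nz by blast
  then show "\<exists>j<J. cmp c b + cmp c r - cmp c y = of_nat j"
  proof cases
    case 1
    then obtain j where j: "j < J" "cmp c b + cmp c r - cmp c (y - ev c') = of_nat j"
      using assms unfolding Sd_def by blast
    show ?thesis
    proof (cases "c' = c")
      case False then show ?thesis using j by (intro exI[of _ j]) (simp add: cmp_shift)
    next
      case True
      then have e: "cmp c b + cmp c r - cmp c y + 1 = of_nat j" using j(2) by (simp add: algebra_simps)
      then have "j \<noteq> 0" using 1 True by auto
      then have "cmp c b + cmp c r - cmp c y = of_nat (j - 1)" using e by (simp add: of_nat_diff algebra_simps)
      then show ?thesis using j(1) by (intro exI[of _ "j - 1"]) auto
    qed
  next
    case 2 then show ?thesis using assms unfolding Sd_def by blast
  qed
qed

lemma ps_Sd_dec: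
  assumes "Sd b c r (Suc J) g" shows "Sd b c r J (ps b c (cmp c r - of_nat J) r g)"
  unfolding Sd_def
proof (intro allI impI)
  fix y assume "ps b c (cmp c r - of_nat J) r g y \<noteq> 0"
  then consider "cmp c b + cmp c r - cmp c y + 1 \<noteq> 0" "g (y - ev c) \<noteq> 0"
    | "cmp c y - cmp c b - (cmp c r - of_nat J) \<noteq> 0" "g y \<noteq> 0"
    using ps_nz by blast
  then show "\<exists>j<J. cmp c b + cmp c r - cmp c y = of_nat j"
  proof cases
    case 1
    then obtain j where j: "j < Suc J" "cmp c b + cmp c r - cmp c (y - ev c) = of_nat j"
      using assms unfolding Sd_def by blast
    then have e: "cmp c b + cmp c r - cmp c y + 1 = of_nat j" by (simp add: algebra_simps)
    then have "j \<noteq> 0" using 1 by auto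
    then have "cmp c b + cmp c r - cmp c y = of_nat (j - 1)" using e by (simp add: of_nat_diff algebra_simps)
    then show ?thesis using j(1) \<open>j \<noteq> 0\<close> by (intro exI[of _ "j - 1"]) auto
  next
    case 2
    then obtain j where j: "j < Suc J" "cmp c b + cmp c r - cmp c y = of_nat j"
      using assms unfolding Sd_def by blast
    have "j \<noteq> J"
    proof
      assume "j = J"
      then have "cmp c y - cmp c b - (cmp c r - of_nat J) = 0" using j(2) by (simp add: algebra_simps)
      then show False using 2 by simp
    qed
    then show ?thesis using j by (intro exI[of _ j]) auto
  qed
qed

lemma Sd0: "Sd b c r 0 g \<Longrightarrow> g = (\<lambda>x. 0)"
  unfolding Sd_def by auto

lemma ps_Sinf_pres:
  assumes "Sinf b c r g" shows "Sinf b c r (ps b c' l r g)"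
  unfolding Sinf_def
proof (intro allI impI)
  fix y assume "ps b c' l r g y \<noteq> 0"
  then consider "cmp c' b + cmp c' r - cmp c' y + 1 \<noteq> 0" "g (y - ev c') \<noteq> 0" | "g y \<noteq> 0"
    using ps_nz by blast
  then show "cmp c b + cmp c r - cmp c y \<in> \<nat>"
  proof cases
    case 1
    then have j: "cmp c b + cmp c r - cmp c (y - ev c') \<in> \<nat>"
      using assms unfolding Sinf_def by blast
    show ?thesis
    proof (cases "c' = c")
      case False then show ?thesis using j by (simp add: cmp_shift)
    next
      case True
      then have e: "cmp c b + cmp c r - cmp c y + 1 \<in> \<nat>" using j by (simp add: algebra_simps)
      then obtain j where e': "cmp c b + cmp c r - cmp c y + 1 = of_nat j" by (rule Nats_cases)
      then have "j \<noteq> 0" using 1 True by auto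
      then have "cmp c b + cmp c r - cmp c y = of_nat (j - 1)" using e' by (simp add: of_nat_diff algebra_simps)
      then show ?thesis by simp
    qed
  next
    case 2 then show ?thesis using assms unfolding Sinf_def by blast
  qed
qed

lemma Ps_Sd_pres: "Sd b c r J g \<Longrightarrow> Sd b c r J (Ps b r ops g)"
  by (induction ops arbitrary: g) (auto simp: ps_Sd_pres)

lemma Ps_Sinf_pres: "Sinf b c r g \<Longrightarrow> Sinf b c r (Ps b r ops g)"
  by (induction ops arbitrary: g) (auto simp: ps_Sinf_pres)

lemma Ps_blk_kill: "Sd b c r J g \<Longrightarrow> Ps b r (blk c (cmp c r) J) g = (\<lambda>x. 0)"
proof (induction J arbitrary: g)
  case 0 then show ?case using Sd0 by simp
next
  case (Suc J)
  then show ?case using ps_Sd_dec[OF Suc.prems] by simp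
qed

lemma Ps_kill:
  assumes "Sd b c r J g"
  shows "Ps b r (o1 @ blk c (cmp c r) J @ o2) g = (\<lambda>x. 0)"
proof -
  have "Sd b c r J (Ps b r o1 g)" using assms by (rule Ps_Sd_pres)
  then show ?thesis by (simp add: Ps_append Ps_blk_kill Ps_zero)
qed

lemma ps_inj:
  assumes fs: "fsupp g" and si: "Sinf b c r g" and nl: "l - cmp c r \<notin> \<int>"
    and z: "ps b c l r g = (\<lambda>x. 0)"
  shows "g = (\<lambda>x. 0)"
proof (rule ccontr)
  assume "g \<noteq> (\<lambda>x. 0)"
  let ?S = "{x. g x \<noteq> 0}"
  let ?d = "\<lambda>x. nat_part (cmp c b + cmp c r - cmp c x)"
  have fS: "finite ?S" using fs by (simp add: fsupp_def)
  have nS: "?S \<noteq> {}" using \<open>g \<noteq> (\<lambda>x. 0)\<close> by auto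
  define m where "m = Max (?d ` ?S)"
  have "m \<in> ?d ` ?S" using Max_in[of "?d ` ?S"] fS nS unfolding m_def by auto
  then obtain y where y: "y \<in> ?S" "?d y = m" by blast
  have "cmp c b + cmp c r - cmp c y \<in> \<nat>" using si y(1) unfolding Sinf_def by blast
  then have dy: "of_nat (?d y) = cmp c b + cmp c r - cmp c y" by (rule of_nat_nat_part)
  have "g (y - ev c) = 0"
  proof (rule ccontr)
    assume a: "g (y - ev c) \<noteq> 0"
    then have "cmp c b + cmp c r - cmp c (y - ev c) \<in> \<nat>" using si unfolding Sinf_def by blast
    have "cmp c b + cmp c r - cmp c (y - ev c) = of_nat (Suc (?d y))" using dy by (simp add: algebra_simps)
    then have "?d (y - ev c) = Suc m" using y(2) by (metis nat_part_of_nat)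
    moreover have "?d (y - ev c) \<le> m" unfolding m_def using a fS by (intro Max_ge) (auto simp del: cmp_diff)
    ultimately show False by simp
  qed
  then have "sc (cmp c y - cmp c b - l) (g y) = 0" using z unfolding ps_def fun_eq_iff by (metis add_0 scale_zero_right)
  moreover have "cmp c y - cmp c b - l \<noteq> 0"
  proof
    assume "cmp c y - cmp c b - l = 0"
    then have "l - cmp c r = - of_nat (?d y)" using dy by (simp add: algebra_simps)
    then show False using nl by (metis Ints_minus Ints_of_nat)
  qed
  ultimately show False using y(1) by simp
qed

lemma Ps_inj:
  assumes "fsupp g" "Sinf b False r g" "Sinf b True r g"
    "\<forall>(c, l) \<in> set ops. l - cmp c r \<notin> \<int>" "Ps b r ops g = (\<lambda>x. 0)"
  shows "g = (\<lambda>x. 0)"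
  using assms
proof (induction ops arbitrary: g)
  case Nil then show ?case by simp
next
  case (Cons a ops)
  obtain c l where a: "a = (c, l)" by (cases a)
  have z: "ps b c l r g = (\<lambda>x. 0)"
    using Cons.IH[of "ps b c l r g"] Cons.prems a ps_fsupp ps_Sinf_pres by auto
  have si: "Sinf b c r g" using Cons.prems by (cases c) auto
  have nl: "l - cmp c r \<notin> \<int>" using Cons.prems(4) a by auto
  show ?case by (rule ps_inj[OF Cons.prems(1) si nl z])
qed

end

lemma grp6: "(z::'a::ab_group_add) - x0 = (z - y) + (y - x0)" by (simp add: algebra_simps)
lemma grp7: "(m::'a::ab_group_add) - (x - r - bb) = (bb + m) + r - x" by (simp add: algebra_simps)
lemma grp8: "(x0::'a::ab_group_add) - y = - (y - x0)" by (simp add: algebra_simps)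

lemma natp_shift_up:
  assumes "natp ((of_nat M, of_nat M) - z)" "M \<le> M'"
  shows "natp ((of_nat M', of_nat M') - (z::'k::ring_char_0 \<times> 'k))"
proof -
  have *: "of_nat M' - a = (of_nat M - a) + of_nat (M' - M)" for a :: 'k
    using assms(2) by (simp add: of_nat_diff)
  show ?thesis using assms(1) unfolding natp_def by (simp only: fst_diff snd_diff fst_conv snd_conv *) (simp add: Nats_add)
qed

lemma natp_big:
  assumes "intp (z::'k::ring_char_0 \<times> 'k)"
  shows "natp ((of_nat (max (nat (int_part (fst z))) (nat (int_part (snd z)))), of_nat (max (nat (int_part (fst z))) (nat (int_part (snd z))))) - z)"
proof -
  have *: "of_nat M - x \<in> \<nat>" if "x \<in> \<int>" "nat (int_part x) \<le> M" for x :: 'k and M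
  proof -
    have x: "x = of_int (int_part x)" using that(1) by (simp add: of_int_int_part)
    have "of_nat M - x = of_int (int M - int_part x)" by (subst x) simp
    also have "\<dots> = of_nat (nat (int M - int_part x))" using that(2) by simp
    finally show ?thesis by simp
  qed
  show ?thesis using assms unfolding natp_def intp_def by (auto intro!: *)
qed

lemma top_exists:
  assumes "finite Z" "\<forall>z\<in>Z. intp z"
  shows "\<exists>M::nat. \<forall>z\<in>Z. natp ((of_nat M, of_nat M) - (z::'k::ring_char_0 \<times> 'k))"
  using assms
proof (induction Z rule: finite_induct)
  case empty then show ?case by simp
next
  case (insert z F)
  then obtain M where M: "\<forall>z\<in>F. natp ((of_nat M, of_nat M) - z)" by auto
  define M0 where "M0 = max (nat (int_part (fst z))) (nat (int_part (snd z)))"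
  have iz: "intp z" using insert.prems by simp
  have z0: "natp ((of_nat M0, of_nat M0) - z)" unfolding M0_def by (rule natp_big[OF iz])
  show ?case
  proof (intro exI[of _ "max M M0"] ballI)
    fix z' assume "z' \<in> insert z F"
    then show "natp ((of_nat (max M M0), of_nat (max M M0)) - z')"
    proof
      assume "z' = z" then show ?thesis using natp_shift_up[OF z0, of "max M M0"] by simp
    next
      assume "z' \<in> F" then show ?thesis using natp_shift_up[OF M[rule_format, OF \<open>z' \<in> F\<close>], of "max M M0"] by simp
    qed
  qed
qed

context kvs
begin

lemma Xinj:
  assumes fs: "fsupp g" and z: "\<forall>p. Xe r g p = 0"
  shows "g = (\<lambda>x. 0)"
proof (rule ccontr)
  assume ne0: "g \<noteq> (\<lambda>x. 0)"
  have "\<exists>x. g x \<noteq> 0"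
  proof (rule ccontr)
    assume "\<not> (\<exists>x. g x \<noteq> 0)"
    then have "g = (\<lambda>x. 0)" by (intro ext) blast
    then show False using ne0 by simp
  qed
  then obtain x1 where x1: "g x1 \<noteq> 0" by blast
  let ?S = "{x. g x \<noteq> 0}"
  have fS: "finite ?S" using fs by (simp add: fsupp_def)
  let ?up = "\<lambda>x. {y\<in>?S. natp (y - x)}"
  obtain x0 where x0: "x0 \<in> ?S" and mn: "\<forall>y. y \<in> ?S \<longrightarrow> card (?up x0) \<le> card (?up y)"
    using ex_has_least_nat[of "\<lambda>x. x \<in> ?S" x1 "\<lambda>x. card (?up x)"] x1 by auto
  have uniq: "y = x0" if y: "y \<in> ?S" "natp (y - x0)" for y
  proof (rule ccontr)
    assume ne: "y \<noteq> x0"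
    have sub: "?up y \<subseteq> ?up x0"
    proof
      fix z assume "z \<in> ?up y"
      then have "z \<in> ?S" "natp (z - y)" by auto
      moreover have "natp ((z - y) + (y - x0))" using \<open>natp (z - y)\<close> y(2) by (rule natp_add)
      then have "natp (z - x0)" unfolding grp6[of z x0 y, symmetric] .
      ultimately show "z \<in> ?up x0" by simp
    qed
    have "x0 \<in> ?up x0" using x0 by simp
    moreover have "x0 \<notin> ?up y"
    proof
      assume "x0 \<in> ?up y"
      then have "natp (x0 - y)" by simp
      then have "natp (- (y - x0))" unfolding grp8[of x0 y] .
      then have "y - x0 = 0" using natp_antisym y(2) by blast
      then show False using ne by simp
    qed
    ultimately have "?up y \<subset> ?up x0" using sub by blast
    then have "card (?up y) < card (?up x0)" using fS by (intro psubset_card_mono) auto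
    moreover have "card (?up x0) \<le> card (?up y)" using mn y(1) by blast
    ultimately show False by simp
  qed
  have "Xe r g (x0 - r) = Sum_any (\<lambda>x. sc (NB2 (- r) (x - x0)) (g x))"
    unfolding Xe_def by (simp only: grp4)
  also have "\<dots> = (\<Sum>x\<in>{x0}. sc (NB2 (- r) (x - x0)) (g x))"
  proof (rule Sum_any.expand_superset)
    show "{a. sc (NB2 (- r) (a - x0)) (g a) \<noteq> 0} \<subseteq> {x0}"
    proof
      fix a assume "a \<in> {a. sc (NB2 (- r) (a - x0)) (g a) \<noteq> 0}"
      then have ga: "g a \<noteq> 0" and nb: "NB2 (- r) (a - x0) \<noteq> 0" by auto
      from nb have "natp (a - x0)" by (rule NB2_nz)
      then show "a \<in> {x0}" using uniq ga by simp
    qed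
  qed simp
  also have "\<dots> = g x0" by simp
  finally show False using z x0 by simp
qed

definition rs :: "'k \<times> 'k \<Rightarrow> 'k \<times> 'k \<Rightarrow> ('k \<times> 'k \<Rightarrow> 'v) \<Rightarrow> 'k \<times> 'k \<Rightarrow> 'v" where
  "rs bb r g x = (if intp (x - r - bb) then g x else 0)"

lemma rs_fsupp: "fsupp g \<Longrightarrow> fsupp (rs bb r g)"
  unfolding fsupp_def rs_def by (rule finite_subset[rotated]) auto

lemma Xe_rs: "Xe r (rs bb r g) p = (if intp (p - bb) then Xe r g p else 0)"
proof (cases "intp (p - bb)")
  case True
  have "Xe r (rs bb r g) p = Xe r g p"
    unfolding Xe_def
  proof (rule Sum_any.cong)
    fix x
    show "sc (NB2 (- r) (x - p - r)) (rs bb r g x) = sc (NB2 (- r) (x - p - r)) (g x)"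
    proof (cases "NB2 (- r) (x - p - r) = 0")
      case False
      then have "intp (x - p - r)" using NB2_nz natp_intp by blast
      then have "intp ((x - p - r) + (p - bb))" using True by (rule intp_add)
      then have "intp (x - r - bb)" unfolding grp2[of x r bb p, symmetric] .
      then show ?thesis by (simp add: rs_def)
    qed simp
  qed
  then show ?thesis using True by simp
next
  case False
  have "Xe r (rs bb r g) p = Sum_any (\<lambda>x::'k\<times>'k. 0::'v)"
    unfolding Xe_def
  proof (rule Sum_any.cong)
    fix x
    show "sc (NB2 (- r) (x - p - r)) (rs bb r g x) = 0"
    proof (cases "NB2 (- r) (x - p - r) = 0")
      case False2: False
      then have "intp (x - p - r)" using NB2_nz natp_intp by blast
      then have "\<not> intp (x - r - bb)" using False by (metis grp3 intp_diff)
      then show ?thesis by (simp add: rs_def)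
    qed simp
  qed
  then show ?thesis using False by simp
qed

lemma Sinf_Sd:
  assumes fs: "fsupp g" and si: "Sinf b c r g"
  shows "\<exists>J. Sd b c r J g"
proof -
  let ?S = "{x. g x \<noteq> 0}"
  let ?d = "\<lambda>x. nat_part (cmp c b + cmp c r - cmp c x)"
  have fS: "finite ?S" using fs by (simp add: fsupp_def)
  define J where "J = Suc (Max (insert 0 (?d ` ?S)))"
  have "Sd b c r J g" unfolding Sd_def
  proof (intro allI impI)
    fix x assume x: "g x \<noteq> 0"
    have "cmp c b + cmp c r - cmp c x \<in> \<nat>" using si x unfolding Sinf_def by blast
    then have "cmp c b + cmp c r - cmp c x = of_nat (?d x)" by (simp add: of_nat_nat_part)
    moreover have "?d x < J" unfolding J_def using fS x by (simp add: le_imp_less_Suc)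
    ultimately show "\<exists>j<J. cmp c b + cmp c r - cmp c x = of_nat j" by blast
  qed
  then show ?thesis by blast
qed

end

context kvs
begin

lemma rs_nz: "rs bb r g x \<noteq> 0 \<Longrightarrow> intp (x - r - bb) \<and> g x \<noteq> 0"
  unfolding rs_def by (auto split: if_splits)

lemma Sinf_top:
  assumes "\<forall>x. g x \<noteq> 0 \<longrightarrow> natp ((of_nat M, of_nat M) - (x - r - bb))"
  shows "Sinf (bb + (of_nat M, of_nat M)) c r g"
  unfolding Sinf_def
proof (intro allI impI)
  fix x assume "g x \<noteq> 0"
  then have "natp ((of_nat M, of_nat M) - (x - r - bb))" using assms by blast
  then have "natp ((bb + (of_nat M, of_nat M)) + r - x)" unfolding grp7 .
  then have "cmp c ((bb + (of_nat M, of_nat M)) + r - x) \<in> \<nat>" by (rule natp_cmp)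
  then show "cmp c (bb + (of_nat M, of_nat M)) + cmp c r - cmp c x \<in> \<nat>" by simp
qed

lemma ops_kill:
  assumes "l \<in> set ls" "Sd b (cc l) (h l) (Jf l) g"
  shows "Ps b (h l) (concat (map (\<lambda>l. blk (cc l) (cmp (cc l) (h l)) (Jf l)) ls)) g = (\<lambda>x. 0)"
proof -
  obtain xs ys where ls: "ls = xs @ l # ys" using split_list[OF assms(1)] by blast
  let ?f = "\<lambda>l. blk (cc l) (cmp (cc l) (h l)) (Jf l)"
  have "concat (map ?f ls) = concat (map ?f xs) @ blk (cc l) (cmp (cc l) (h l)) (Jf l) @ concat (map ?f ys)"
    using ls by simp
  then show ?thesis using Ps_kill[OF assms(2)] by simp
qed

lemma CORE:
  fixes Gm :: "'k \<times> 'k \<Rightarrow> 'v" and gm :: "'l \<Rightarrow> 'k \<times> 'k \<Rightarrow> 'v" and h :: "'l \<Rightarrow> 'k \<times> 'k"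
  assumes fL: "finite L" and fG: "fsupp Gm" and fg: "\<forall>l\<in>L. fsupp (gm l)"
    and ni: "\<forall>l\<in>L. \<not> intp (h l - r0)"
    and E: "\<forall>p. Xe r0 Gm p + (\<Sum>l\<in>L. Xe (h l) (gm l) p) = 0"
  shows "Gm = (\<lambda>x. 0)"
proof (rule ccontr)
  assume "Gm \<noteq> (\<lambda>x. 0)"
  have "\<exists>x. Gm x \<noteq> 0"
  proof (rule ccontr)
    assume "\<not> (\<exists>x. Gm x \<noteq> 0)"
    then have "Gm = (\<lambda>x. 0)" by (intro ext) blast
    then show False using \<open>Gm \<noteq> (\<lambda>x. 0)\<close> by simp
  qed
  then obtain x0 where x0: "Gm x0 \<noteq> 0" by blast
  define bb where "bb = x0 - r0"
  define G' where "G' = rs bb r0 Gm"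
  define g' where "g' = (\<lambda>l. rs bb (h l) (gm l))"
  have fG': "fsupp G'" unfolding G'_def using fG by (rule rs_fsupp)
  have fg': "fsupp (g' l)" if "l \<in> L" for l unfolding g'_def using fg that by (simp add: rs_fsupp)
  have E': "Xe r0 G' p + (\<Sum>l\<in>L. Xe (h l) (g' l) p) = 0" for p
  proof (cases "intp (p - bb)")
    case True then show ?thesis using E[rule_format, of p] unfolding G'_def g'_def Xe_rs by simp
  next
    case False then show ?thesis unfolding G'_def g'_def Xe_rs by simp
  qed
  define Z where "Z = (\<lambda>x. x - r0 - bb) ` {x. G' x \<noteq> 0} \<union> (\<Union>l\<in>L. (\<lambda>x. x - h l - bb) ` {x. g' l x \<noteq> 0})"
  have fZ: "finite Z" unfolding Z_def using fG' fg' fL by (auto simp: fsupp_def)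
  have iZ: "\<forall>z\<in>Z. intp z" unfolding Z_def G'_def g'_def using rs_nz by fastforce
  obtain M where M: "\<forall>z\<in>Z. natp ((of_nat M, of_nat M) - z)" using top_exists[OF fZ iZ] by blast
  define b where "b = bb + (of_nat M, of_nat M)"
  have siG: "Sinf b c r0 G'" for c
    unfolding b_def by (rule Sinf_top) (use M in \<open>auto simp: Z_def\<close>)
  have sig: "Sinf b c (h l) (g' l)" if "l \<in> L" for l c
    unfolding b_def by (rule Sinf_top) (use M that in \<open>auto simp: Z_def\<close>)
  define cc where "cc = (\<lambda>l. fst (h l - r0) \<in> \<int>)"
  have ccni: "cmp (cc l) (h l - r0) \<notin> \<int>" if "l \<in> L" for l
    using ni that unfolding cc_def intp_def by (cases "fst (h l - r0) \<in> \<int>") auto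
  define Jf where "Jf = (\<lambda>l. SOME J. Sd b (cc l) (h l) J (g' l))"
  have sd: "Sd b (cc l) (h l) (Jf l) (g' l)" if "l \<in> L" for l
    unfolding Jf_def by (rule someI_ex) (rule Sinf_Sd[OF fg'[OF that] sig[OF that]])
  obtain ls where ls: "set ls = L" using finite_list[OF fL] by blast
  define ops where "ops = concat (map (\<lambda>l. blk (cc l) (cmp (cc l) (h l)) (Jf l)) ls)"
  have kill: "Ps b (h l) ops (g' l) = (\<lambda>x. 0)" if "l \<in> L" for l
    unfolding ops_def using ops_kill[of l ls b cc h Jf "g' l"] sd[OF that] that ls by simp
  have opsni: "\<forall>(c, l') \<in> set ops. l' - cmp c r0 \<notin> \<int>"
  proof (intro ballI, clarify)
    fix c l' assume "(c, l') \<in> set ops"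
    then obtain l where l: "l \<in> L" "(c, l') \<in> set (blk (cc l) (cmp (cc l) (h l)) (Jf l))"
      unfolding ops_def using ls by auto
    then obtain j where c: "c = cc l" and l': "l' = cmp (cc l) (h l) - of_nat j" using blk_set by blast
    assume "l' - cmp c r0 \<in> \<int>"
    then have "cmp (cc l) (h l - r0) - of_nat j \<in> \<int>" using c l' by (simp add: algebra_simps)
    then have "cmp (cc l) (h l - r0) \<in> \<int>" by (metis Ints_add Ints_of_nat diff_add_cancel)
    then show False using ccni[OF l(1)] by simp
  qed
  have Y0: "(\<lambda>p. Xe r0 G' p + (\<Sum>l\<in>L. Xe (h l) (g' l) p)) = (\<lambda>p. 0)" using E' by simp
  have "Th b ops (\<lambda>p. Xe r0 G' p + (\<Sum>l\<in>L. Xe (h l) (g' l) p))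
      = (\<lambda>p. Xe r0 (Ps b r0 ops G') p + (\<Sum>l\<in>L. Xe (h l) (Ps b (h l) ops (g' l)) p))"
    unfolding Th_add Th_sum using Th_X[OF fG'] Th_X[OF fg'] by simp
  also have "\<dots> = (\<lambda>p. Xe r0 (Ps b r0 ops G') p)"
    using kill by (simp add: Xe_zero)
  finally have "Xe r0 (Ps b r0 ops G') p = 0" for p using Y0 Th_zero by (metis)
  then have "Ps b r0 ops G' = (\<lambda>x. 0)" using Xinj[OF Ps_fsupp[OF fG']] by blast
  then have "G' = (\<lambda>x. 0)" using Ps_inj[OF fG' siG siG opsni] by blast
  moreover have "G' x0 = Gm x0" unfolding G'_def rs_def bb_def by simp
  ultimately show False using x0 by simp
qed

end

lemma grp9: "(hl::'a::ab_group_add) + (kk - (hl - m)) = m + kk" by (simp add: algebra_simps)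
lemma grp10: "(hl::'a::ab_group_add) - m + (kk - (hl - m)) = kk" by (simp add: algebra_simps)
lemma grp11: "(hl::'a::ab_group_add) - m = (hl - (m + kk)) + kk" by (simp add: algebra_simps)

lemma DB2_nz: "DB2 x k \<noteq> 0 \<Longrightarrow> natp k"
  by (auto simp: DB2_def DB1_def natp_def split: if_splits)

lemma natp_not_intp: "\<not> intp k \<Longrightarrow> \<not> natp (k::'k::ring_1 \<times> 'k)"
  using natp_intp by blast

context kvs
begin

lemma CF_sum:
  assumes "finite L" "\<forall>l\<in>L. fsupp (g l)"
  shows "CF f (\<lambda>x. \<Sum>l\<in>L. g l x) = (\<Sum>l\<in>L. CF f (g l))"
proof -
  define S where "S = (\<Union>l\<in>L. {x. g l x \<noteq> 0})"
  have fS: "finite S" unfolding S_def using assms by (auto simp: fsupp_def)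
  have sub: "{x. g l x \<noteq> 0} \<subseteq> S" if "l \<in> L" for l unfolding S_def using that by auto
  have sub2: "{x. (\<Sum>l\<in>L. g l x) \<noteq> 0} \<subseteq> S"
  proof
    fix x assume "x \<in> {x. (\<Sum>l\<in>L. g l x) \<noteq> 0}"
    then obtain l where "l \<in> L" "g l x \<noteq> 0" by (auto elim: sum.not_neutral_contains_not_neutral)
    then show "x \<in> S" unfolding S_def by auto
  qed
  have "CF f (\<lambda>x. \<Sum>l\<in>L. g l x) = (\<Sum>x\<in>S. sc (f x) (\<Sum>l\<in>L. g l x))"
    unfolding CF_def using fS sub2 by (rule SA_sc)
  also have "\<dots> = (\<Sum>l\<in>L. \<Sum>x\<in>S. sc (f x) (g l x))"
    unfolding scale_sum_right by (rule sum.swap)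
  also have "\<dots> = (\<Sum>l\<in>L. CF f (g l))"
    unfolding CF_def using SA_sc[OF fS sub] by simp
  finally show ?thesis .
qed

lemma Xe_sum: "finite L \<Longrightarrow> \<forall>l\<in>L. fsupp (g l) \<Longrightarrow> Xe r (\<lambda>x. \<Sum>l\<in>L. g l x) p = (\<Sum>l\<in>L. Xe r (g l) p)"
  unfolding Xe_CF by (rule CF_sum)

lemma Te_CF: "Te k g = CF (\<lambda>x. DB2 x k) g" unfolding Te_def CF_def ..

lemma Te_sum: "finite L \<Longrightarrow> \<forall>l\<in>L. fsupp (g l) \<Longrightarrow> Te k (\<lambda>x. \<Sum>l\<in>L. g l x) = (\<Sum>l\<in>L. Te k (g l))"
  unfolding Te_CF by (rule CF_sum)

lemma Te_notnat:
  assumes "\<not> natp k" shows "Te k g = 0"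
proof -
  have "DB2 x k = 0" for x using DB2_nz assms by blast
  then show ?thesis unfolding Te_def by simp
qed

lemma Te_zero: "Te k (\<lambda>x. 0) = 0" unfolding Te_def by simp

lemma ind_slice:
  fixes gm :: "'l \<Rightarrow> 'k \<times> 'k \<Rightarrow> 'v" and h :: "'l \<Rightarrow> 'k \<times> 'k"
  assumes fL: "finite L" and fg: "\<forall>l\<in>L. fsupp (gm l)"
    and E: "\<forall>p. (\<Sum>l\<in>L. Xe (h l) (gm l) p) = 0"
  shows "(\<Sum>l\<in>L. Te (h l - m) (gm l)) = 0"
proof -
  define G0 where "G0 = {l\<in>L. intp (h l - m)}"
  have G0L: "G0 \<subseteq> L" unfolding G0_def by auto
  have fG0: "finite G0" using fL G0L finite_subset by blast
  have out: "Te (h l - m) (gm l) = 0" if "l \<in> L - G0" for l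
  proof -
    have "\<not> intp (h l - m)" using that unfolding G0_def by blast
    then show ?thesis by (intro Te_notnat natp_not_intp)
  qed
  have split: "(\<Sum>l\<in>L. F l) = (\<Sum>l\<in>G0. F l) + (\<Sum>l\<in>L - G0. F l)" for F :: "'l \<Rightarrow> 'v"
    using sum.subset_diff[OF G0L fL] by (simp only: add.commute)
  have iG: "\<forall>z\<in>(\<lambda>l. h l - m) ` G0. intp z" unfolding G0_def by blast
  obtain M where M: "\<forall>z\<in>(\<lambda>l. h l - m) ` G0. natp ((of_nat M, of_nat M) - z)"
    using top_exists[OF finite_imageI[OF fG0] iG] by blast
  define \<kappa> where "\<kappa> = (M, M)"
  have pk: "pnat \<kappa> = (of_nat M, of_nat M)" unfolding \<kappa>_def by simp
  define d where "d = (\<lambda>l. pnat \<kappa> - (h l - m))"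
  define kf where "kf = (\<lambda>l. (nat_part (fst (d l)), nat_part (snd (d l))))"
  have pkf: "pnat (kf l) = d l" if "l \<in> G0" for l
  proof -
    have "natp (d l)" unfolding d_def pk using M that by blast
    then show ?thesis unfolding kf_def by (rule natpE[symmetric])
  qed
  define H where "H = m + pnat \<kappa>"
  have hk: "h l + pnat (kf l) = H" if "l \<in> G0" for l
    unfolding pkf[OF that] d_def H_def by (rule grp9)
  have tk: "(h l - m) + pnat (kf l) = pnat \<kappa>" if "l \<in> G0" for l
    unfolding pkf[OF that] d_def by (rule grp10)
  define Gm where "Gm = (\<lambda>x. \<Sum>l\<in>G0. Mul (kf l) (gm l) x)"
  have fMul: "\<forall>l\<in>G0. fsupp (Mul (kf l) (gm l))"
  proof
    fix l assume "l \<in> G0" then have "fsupp (gm l)" using fg G0L by blast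
    then show "fsupp (Mul (kf l) (gm l))" by (rule Mul_fsupp)
  qed
  have fGm: "fsupp Gm" unfolding Gm_def using fG0 fMul by (intro fsupp_sum) auto
  have XG: "Xe H Gm p = (\<Sum>l\<in>G0. Xe (h l) (gm l) p)" for p
  proof -
    have "Xe H Gm p = (\<Sum>l\<in>G0. Xe H (Mul (kf l) (gm l)) p)"
      unfolding Gm_def using fG0 fMul by (rule Xe_sum)
    also have "\<dots> = (\<Sum>l\<in>G0. Xe (h l) (gm l) p)"
    proof (rule sum.cong)
      fix l assume l: "l \<in> G0"
      have "Xe (h l + pnat (kf l)) (Mul (kf l) (gm l)) p = Xe (h l) (gm l) p"
        using fg G0L l by (intro XM) auto
      then show "Xe H (Mul (kf l) (gm l)) p = Xe (h l) (gm l) p" using hk[OF l] by simp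
    qed simp
    finally show ?thesis .
  qed
  have E2: "\<forall>p. Xe H Gm p + (\<Sum>l\<in>L - G0. Xe (h l) (gm l) p) = 0"
  proof
    fix p
    have "Xe H Gm p + (\<Sum>l\<in>L - G0. Xe (h l) (gm l) p) = (\<Sum>l\<in>L. Xe (h l) (gm l) p)"
      unfolding XG[of p] by (rule split[symmetric])
    then show "Xe H Gm p + (\<Sum>l\<in>L - G0. Xe (h l) (gm l) p) = 0" using E by simp
  qed
  have ni: "\<forall>l\<in>L - G0. \<not> intp (h l - H)"
  proof (intro ballI notI)
    fix l assume l: "l \<in> L - G0" and "intp (h l - H)"
    moreover have "intp (pnat \<kappa> :: 'k \<times> 'k)" by (rule natp_intp) simp
    ultimately have "intp ((h l - H) + pnat \<kappa>)" by (intro intp_add)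
    then have "intp (h l - m)" unfolding H_def grp11[of "h l" m "pnat \<kappa>", symmetric] .
    then show False using l unfolding G0_def by auto
  qed
  have fLG: "finite (L - G0)" using fL by simp
  have fgG: "\<forall>l\<in>L - G0. fsupp (gm l)" using fg by blast
  have "Gm = (\<lambda>x. 0)" by (rule CORE[OF fLG fGm fgG ni E2])
  have "(\<Sum>l\<in>L. Te (h l - m) (gm l)) = (\<Sum>l\<in>G0. Te (h l - m) (gm l))"
    unfolding split[of "\<lambda>l. Te (h l - m) (gm l)"] using out by simp
  also have "\<dots> = (\<Sum>l\<in>G0. Te (pnat \<kappa>) (Mul (kf l) (gm l)))"
  proof (rule sum.cong)
    fix l assume l: "l \<in> G0"
    have "Te ((h l - m) + pnat (kf l)) (Mul (kf l) (gm l)) = Te (h l - m) (gm l)"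
      using fg G0L l by (intro TM) auto
    then show "Te (h l - m) (gm l) = Te (pnat \<kappa>) (Mul (kf l) (gm l))" using tk[OF l] by simp
  qed simp
  also have "\<dots> = Te (pnat \<kappa>) Gm"
    unfolding Gm_def using fG0 fMul by (rule Te_sum[symmetric])
  also have "\<dots> = 0" using \<open>Gm = (\<lambda>x. 0)\<close> Te_zero by simp
  finally show ?thesis .
qed

end

lemma SA_reindex:
  assumes "inj \<phi>" "{x. F x \<noteq> 0} \<subseteq> range \<phi>"
  shows "Sum_any F = Sum_any (\<lambda>i. F (\<phi> i))"
proof -
  have e: "{x. F x \<noteq> 0} = \<phi> ` {i. F (\<phi> i) \<noteq> 0}" using assms(2) by blast
  have "Sum_any F = sum F {x. F x \<noteq> 0}" by (rule Sum_any.expand_set)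
  also have "\<dots> = sum F (\<phi> ` {i. F (\<phi> i) \<noteq> 0})" using e by simp
  also have "\<dots> = sum (\<lambda>i. F (\<phi> i)) {i. F (\<phi> i) \<noteq> 0}"
    using assms(1) by (simp add: sum.reindex inj_on_def inj_def)
  also have "\<dots> = Sum_any (\<lambda>i. F (\<phi> i))" by (rule Sum_any.expand_set[symmetric])
  finally show ?thesis .
qed

lemma grp12: "(P::'a::ab_group_add) + Q + h - (P + h + i) = Q - i" by (simp add: algebra_simps)
lemma grp13: "(q::'a::ab_group_add) + k - (p + k) = q - p" by (simp add: algebra_simps)
lemma grp14: "(x::'a::ab_group_add) - P - h = i \<Longrightarrow> x = P + h + i" by (simp add: algebra_simps)

lemma finite_pnat_split: "finite {i::nat \<times> nat. \<exists>j. pnat i + pnat j = (D::'k::ring_char_0 \<times> 'k)}"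
proof (cases "\<exists>i j. pnat i + pnat j = D")
  case False
  then have "{i::nat \<times> nat. \<exists>j. pnat i + pnat j = D} = {}" by blast
  then show ?thesis by (simp only:) simp
next
  case True
  then obtain i0 j0 where "pnat i0 + pnat j0 = D" by blast
  have "{i::nat \<times> nat. \<exists>j. pnat i + pnat j = D} \<subseteq> {..fst i0 + fst j0} \<times> {..snd i0 + snd j0}"
  proof
    fix i assume "i \<in> {i::nat \<times> nat. \<exists>j. pnat i + pnat j = D}"
    then obtain j where "pnat i + pnat j = D" by blast
    then have "pnat i + pnat j = (pnat i0 + pnat j0 :: 'k \<times> 'k)" using \<open>pnat i0 + pnat j0 = D\<close> by simp
    then have "of_nat (fst i + fst j) = (of_nat (fst i0 + fst j0) :: 'k)" "of_nat (snd i + snd j) = (of_nat (snd i0 + snd j0) :: 'k)"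
      by (simp_all add: prod_eq_iff)
    then have "fst i + fst j = fst i0 + fst j0" "snd i + snd j = snd i0 + snd j0" using of_nat_eq_iff by blast+
    then show "i \<in> {..fst i0 + fst j0} \<times> {..snd i0 + snd j0}" by (auto simp: mem_Times_iff)
  qed
  then show ?thesis by (rule finite_subset) simp
qed

context kvs
begin

definition slc :: "('k, 'v) fdist2 \<Rightarrow> 'k \<times> 'k \<Rightarrow> 'v \<Rightarrow> 'k \<times> 'k \<Rightarrow> 'v" where
  "slc c e v x = c x (e - x) v"

lemma slc_fsupp:
  assumes "vertex_series2 (\<lambda>p q. c p q v)"
  shows "fsupp (slc c e v)"
proof -
  obtain S where S: "finite S" "\<forall>p q. c p q v \<noteq> 0 \<longrightarrow> (\<exists>s\<in>S. \<exists>i j::nat\<times>nat. p = padd (fst s) (pnat i) \<and> q = padd (snd s) (pnat j))"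
    using assms unfolding vertex_series2_def by blast
  have "{x. slc c e v x \<noteq> 0} \<subseteq> (\<Union>s\<in>S. (\<lambda>i. fst s + pnat i) ` {i. \<exists>j. pnat i + pnat j = e - fst s - snd s})"
  proof
    fix x assume "x \<in> {x. slc c e v x \<noteq> 0}"
    then have "c x (e - x) v \<noteq> 0" unfolding slc_def by simp
    then obtain s i j where s: "s \<in> S" "x = fst s + pnat i" "e - x = snd s + pnat j"
      using S(2) unfolding padd_eq by blast
    have "pnat i + pnat j = e - fst s - snd s" using s(2,3) by (simp add: prod_eq_iff algebra_simps)
    then show "x \<in> (\<Union>s\<in>S. (\<lambda>i. fst s + pnat i) ` {i. \<exists>j. pnat i + pnat j = e - fst s - snd s})"
      using s by blast
  qed
  moreover have "finite (\<Union>s\<in>S. (\<lambda>i. fst s + pnat i) ` {i. \<exists>j. pnat i + pnat j = e - fst s - snd s})"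
    using S(1) finite_pnat_split by blast
  ultimately show ?thesis unfolding fsupp_def by (rule finite_subset)
qed

lemma expand_zw_Xe:
  "expand_zw sc (pneg h) c P Q v = Xe h (slc c (P + Q + h) v) P"
proof -
  have "Xe h (slc c (P + Q + h) v) P = Sum_any (\<lambda>i. sc (NB2 (- h) ((P + h + pnat i) - P - h)) (slc c (P + Q + h) v (P + h + pnat i)))"
    unfolding Xe_def
  proof (rule SA_reindex)
    show "inj (\<lambda>i. P + h + pnat i)" by (rule injI) simp
    show "{x. sc (NB2 (- h) (x - P - h)) (slc c (P + Q + h) v x) \<noteq> 0} \<subseteq> range (\<lambda>i. P + h + pnat i)"
    proof
      fix x assume "x \<in> {x. sc (NB2 (- h) (x - P - h)) (slc c (P + Q + h) v x) \<noteq> 0}"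
      then have "NB2 (- h) (x - P - h) \<noteq> 0" by auto
      then have "natp (x - P - h)" by (rule NB2_nz)
      then obtain i where "x - P - h = pnat i" using natp_iff by blast
      then show "x \<in> range (\<lambda>i. P + h + pnat i)" using grp14 by blast
    qed
  qed
  also have "\<dots> = expand_zw sc (pneg h) c P Q v"
    unfolding expand_zw_def
  proof (rule Sum_any.cong)
    fix i :: "nat \<times> nat"
    have a: "(P + h + pnat i) - P - h = pnat i" by (simp add: prod_eq_iff)
    have b: "slc c (P + Q + h) v (P + h + pnat i) = c (padd (psub P (pneg h)) (pnat i)) (psub Q (pnat i)) v"
      unfolding slc_def padd_eq psub_eq pneg_eq grp12 by (simp add: prod_eq_iff)
    have d: "NB2 (- h) (pnat i) = (-1) ^ (fst i + snd i) * (fst (pneg h) gchoose fst i) * (snd (pneg h) gchoose snd i)"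
      by (simp add: NB2_def pneg_def power_add mult_ac)
    show "sc (NB2 (- h) ((P + h + pnat i) - P - h)) (slc c (P + Q + h) v (P + h + pnat i)) =
      sc ((-1) ^ (fst i + snd i) * (fst (pneg h) gchoose fst i) * (snd (pneg h) gchoose snd i))
         (c (padd (psub P (pneg h)) (pnat i)) (psub Q (pnat i)) v)"
      unfolding a b d ..
  qed
  finally show ?thesis by simp
qed

lemma diag_Te:
  "diag (deriv2 sc k c) q v = Te k (slc c (q + k) v)"
proof -
  have "Te k (slc c (q + k) v) = Sum_any (\<lambda>p. sc (DB2 (p + k) k) (slc c (q + k) v (p + k)))"
    unfolding Te_def
  proof (rule SA_reindex)
    show "inj (\<lambda>p. p + k)" by (rule injI) simp
    show "{x. sc (DB2 x k) (slc c (q + k) v x) \<noteq> 0} \<subseteq> range (\<lambda>p. p + k)"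
      by (auto intro: image_eqI[of _ _ "_ - k"])
  qed
  also have "\<dots> = diag (deriv2 sc k c) q v"
    unfolding diag_def deriv2_def
  proof (rule Sum_any.cong)
    fix p
    show "sc (DB2 (p + k) k) (slc c (q + k) v (p + k)) =
          sc (ddiv (fst k) (fst p) * ddiv (snd k) (snd p)) (c (padd p k) (psub q p) v)"
      unfolding slc_def grp13 padd_eq psub_eq by (simp add: DB2_def DB1_def ddiv_def)
  qed
  finally show ?thesis by simp
qed

end

lemma grp15: "(P::'a::ab_group_add) + (q - m - P) + hi = q + (hi - m)" by (simp add: algebra_simps)
lemma psub_psub_11: "psub (psub (h::'k::ring_1 \<times> 'k) (1, 1)) n = h - (n + (1, 1))"
  by (simp add: psub_eq algebra_simps)

lemma Sum_any_neg: "Sum_any (\<lambda>x. - f x) = - Sum_any (f :: 'a \<Rightarrow> 'b::ab_group_add)"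
proof -
  have "{x. - f x \<noteq> 0} = {x. f x \<noteq> 0}" by auto
  then show ?thesis by (simp add: Sum_any.expand_set sum_negf)
qed

lemma sum_Plus_split:
  assumes "finite I" "finite I'"
  shows "(\<Sum>l\<in>Inl ` I \<union> Inr ` I'. F l) = (\<Sum>i\<in>I. F (Inl i)) + (\<Sum>j\<in>I'. F (Inr j))"
proof -
  have "(\<Sum>l\<in>Inl ` I \<union> Inr ` I'. F l) = (\<Sum>l\<in>Inl ` I. F l) + (\<Sum>l\<in>Inr ` I'. F l)"
    using assms by (intro sum.union_disjoint) auto
  also have "(\<Sum>l\<in>Inl ` I. F l) = (\<Sum>i\<in>I. F (Inl i))" by (simp add: sum.reindex)
  also have "(\<Sum>l\<in>Inr ` I'. F l) = (\<Sum>j\<in>I'. F (Inr j))" by (simp add: sum.reindex)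
  finally show ?thesis .
qed

context kvs
begin

lemma Xe_neg: "Xe r (\<lambda>x. - g x) p = - Xe r g p"
  unfolding Xe_def by (simp add: Sum_any_neg)

lemma Te_neg: "Te k (\<lambda>x. - g x) = - Te k g"
  unfolding Te_def by (simp add: Sum_any_neg)

lemma field2_fsupp: "field2 sc c \<Longrightarrow> fsupp (slc c e v)"
  unfolding field2_def by (intro slc_fsupp) blast

lemma OPE_slice:
  assumes "is_OPE sc a b I h c"
  shows "a P (b (q - m - P) v) = (\<Sum>i\<in>I. Xe (h i) (slc (c i) (q + (h i - m)) v) P)"
proof -
  have "\<forall>p q v. a p (b q v) = (\<Sum>i\<in>I. expand_zw sc (pneg (h i)) (c i) p q v)"
    using assms unfolding is_OPE_def by blast
  then have "a P (b (q - m - P) v) = (\<Sum>i\<in>I. expand_zw sc (pneg (h i)) (c i) P (q - m - P) v)" by blast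
  then show ?thesis unfolding expand_zw_Xe grp15 .
qed

lemma OPE_IND:
  assumes o1: "is_OPE sc a b I h c" and o2: "is_OPE sc a b I' h' c'"
  shows "(\<lambda>q v. \<Sum>i\<in>I. diag (deriv2 sc (psub (psub (h i) (1, 1)) n) (c i)) q v)
       = (\<lambda>q v. \<Sum>i\<in>I'. diag (deriv2 sc (psub (psub (h' i) (1, 1)) n) (c' i)) q v)"
proof (intro ext)
  fix q v
  define m where "m = n + (1, 1)"
  define g1 where "g1 = (\<lambda>i. slc (c i) (q + (h i - m)) v)"
  define g2 where "g2 = (\<lambda>i. slc (c' i) (q + (h' i - m)) v)"
  have fI: "finite I" "finite I'" using o1 o2 unfolding is_OPE_def by auto
  have f1: "\<forall>i\<in>I. fsupp (g1 i)" using o1 unfolding is_OPE_def g1_def by (auto intro: field2_fsupp)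
  have f2: "\<forall>i\<in>I'. fsupp (g2 i)" using o2 unfolding is_OPE_def g2_def by (auto intro: field2_fsupp)
  define L where "L = Inl ` I \<union> Inr ` I'"
  define hh where "hh = case_sum h h'"
  define gg where "gg = case_sum g1 (\<lambda>j x. - g2 j x)"
  have fL: "finite L" unfolding L_def using fI by simp
  have fg: "\<forall>l\<in>L. fsupp (gg l)"
  proof
    fix l assume "l \<in> L"
    then show "fsupp (gg l)"
    proof (cases l)
      case (Inl i) then show ?thesis using f1 \<open>l \<in> L\<close> unfolding gg_def L_def by auto
    next
      case (Inr j)
      then have "fsupp (g2 j)" using f2 \<open>l \<in> L\<close> unfolding L_def by auto
      then have "fsupp (\<lambda>x. - g2 j x)" unfolding fsupp_def by simp
      then show ?thesis using Inr unfolding gg_def by simp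
    qed
  qed
  have E: "\<forall>p. (\<Sum>l\<in>L. Xe (hh l) (gg l) p) = 0"
  proof
    fix p
    have "(\<Sum>l\<in>L. Xe (hh l) (gg l) p) = (\<Sum>i\<in>I. Xe (h i) (g1 i) p) + (\<Sum>j\<in>I'. Xe (h' j) (\<lambda>x. - g2 j x) p)"
      unfolding L_def sum_Plus_split[OF fI] by (simp add: hh_def gg_def)
    also have "\<dots> = a p (b (q - m - p) v) - a p (b (q - m - p) v)"
      using OPE_slice[OF o1, of p q m v] OPE_slice[OF o2, of p q m v]
      unfolding Xe_neg sum_negf g1_def g2_def by simp
    finally show "(\<Sum>l\<in>L. Xe (hh l) (gg l) p) = 0" by simp
  qed
  have "(\<Sum>l\<in>L. Te (hh l - m) (gg l)) = 0" by (rule ind_slice[OF fL fg E])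
  moreover have "(\<Sum>l\<in>L. Te (hh l - m) (gg l)) = (\<Sum>i\<in>I. Te (h i - m) (g1 i)) - (\<Sum>j\<in>I'. Te (h' j - m) (g2 j))"
    unfolding L_def sum_Plus_split[OF fI] by (simp add: hh_def gg_def Te_neg sum_negf)
  ultimately have eq: "(\<Sum>i\<in>I. Te (h i - m) (g1 i)) = (\<Sum>j\<in>I'. Te (h' j - m) (g2 j))" by simp
  have "diag (deriv2 sc (psub (psub (h i) (1, 1)) n) (c i)) q v = Te (h i - m) (g1 i)" for i
    unfolding psub_psub_11 diag_Te g1_def m_def ..
  moreover have "diag (deriv2 sc (psub (psub (h' i) (1, 1)) n) (c' i)) q v = Te (h' i - m) (g2 i)" for i
    unfolding psub_psub_11 diag_Te g2_def m_def ..
  ultimately show "(\<Sum>i\<in>I. diag (deriv2 sc (psub (psub (h i) (1, 1)) n) (c i)) q v)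
       = (\<Sum>i\<in>I'. diag (deriv2 sc (psub (psub (h' i) (1, 1)) n) (c' i)) q v)"
    using eq by simp
qed

lemma nprod_eq:
  assumes "is_OPE sc a b I h c"
  shows "nprod sc a n b = (\<lambda>q v. \<Sum>i\<in>I. diag (deriv2 sc (psub (psub (h i) (1, 1)) n) (c i)) q v)"
proof -
  let ?F = "\<lambda>I h c. (\<lambda>q v. \<Sum>i\<in>I. diag (deriv2 sc (psub (psub (h i) (1, 1)) n) (c i)) q v)"
  let ?P = "\<lambda>d. \<exists>I h c. is_OPE sc a b I h c \<and> d = ?F I h c"
  have "?P (?F I h c)" using assms by blast
  then have "?P (SOME d. ?P d)" by (rule someI[where P = ?P])
  then obtain I' h' c' where o2: "is_OPE sc a b I' h' c'" and e: "(SOME d. ?P d) = ?F I' h' c'" by blast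
  have "nprod sc a n b = ?F I' h' c'" unfolding nprod_def e ..
  also have "\<dots> = ?F I h c" using OPE_IND[OF o2 assms] .
  finally show ?thesis .
qed

end

lemma neg1_powi: "((-1)::'k::field) powi z = (if even z then 1 else -1)"
proof (cases "z \<ge> 0")
  case True
  then have "(-1::'k) powi z = (-1) ^ nat z" by (simp add: power_int_def)
  also have "\<dots> = (if even (nat z) then 1 else -1)" by simp
  finally show ?thesis using True by (simp add: even_nat_iff)
next
  case False
  then show ?thesis by (cases "even (nat (- z))") (simp_all add: power_int_def even_nat_iff)
qed

lemma neg1_rel:
  fixes n h :: "'k::field_char_0 \<times> 'k" and K :: "nat \<times> nat"
  assumes "fst n - snd n \<in> \<int>" "h = n + (1, 1) + pnat K"
  shows "neg1_pow (fst (pneg h) - snd (pneg h)) = neg1_pow (fst n - snd n) * (-1) ^ (fst K + snd K :: nat)"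
proof -
  obtain N where N: "fst n - snd n = (of_int N :: 'k)" using assms(1) by (auto elim!: Ints_cases)
  have "fst (pneg h) - snd (pneg h) = - (fst n - snd n) - of_nat (fst K) + of_nat (snd K)"
    using assms(2) by (simp add: pneg_def algebra_simps)
  also have "\<dots> = of_int (- N - int (fst K) + int (snd K))" using N by simp
  finally have e: "fst (pneg h) - snd (pneg h) = of_int (- N - int (fst K) + int (snd K))" .
  have "even (- N - int (fst K) + int (snd K)) \<longleftrightarrow> even (N + int (fst K + snd K))"
  proof -
    have "N + int (fst K + snd K) = (- N - int (fst K) + int (snd K)) + 2 * (N + int (fst K))" by simp
    then show ?thesis by (metis dvd_add_left_iff dvd_triv_left)
  qed
  then show ?thesis unfolding neg1_pow_def e N int_part_of_int neg1_powi
    by (auto simp: even_add even_of_nat)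
qed

lemma sum_Sum_any_swap:
  assumes "finite I" "\<forall>i\<in>I. finite {j. f i j \<noteq> 0}"
  shows "Sum_any (\<lambda>j. \<Sum>i\<in>I. f i j) = (\<Sum>i\<in>I. Sum_any (f i :: 'a \<Rightarrow> 'b::comm_monoid_add))"
  using assms
proof (induction I rule: finite_induct)
  case empty then show ?case by simp
next
  case (insert x F)
  have f1: "finite {j. f x j \<noteq> 0}" using insert.prems by simp
  have f2: "finite {j. (\<Sum>i\<in>F. f i j) \<noteq> 0}"
  proof (rule finite_subset[of _ "\<Union>i\<in>F. {j. f i j \<noteq> 0}"])
    show "{j. (\<Sum>i\<in>F. f i j) \<noteq> 0} \<subseteq> (\<Union>i\<in>F. {j. f i j \<noteq> 0})"
      by (auto elim: sum.not_neutral_contains_not_neutral)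
    show "finite (\<Union>i\<in>F. {j. f i j \<noteq> 0})" using insert by simp
  qed
  have "Sum_any (\<lambda>j. \<Sum>i\<in>insert x F. f i j) = Sum_any (\<lambda>j. f x j + (\<Sum>i\<in>F. f i j))"
    using insert.hyps by simp
  also have "\<dots> = Sum_any (f x) + Sum_any (\<lambda>j. \<Sum>i\<in>F. f i j)"
    using f1 f2 by (rule Sum_any.distrib)
  finally show ?case using insert by simp
qed

lemma finite_natp_minus: "finite {j::nat \<times> nat. natp (k - pnat j :: 'k::ring_char_0 \<times> 'k)}"
proof (cases "natp k")
  case False
  have "{j::nat \<times> nat. natp (k - pnat j)} = {}"
  proof (rule ccontr)
    assume "{j::nat \<times> nat. natp (k - pnat j)} \<noteq> {}"
    then obtain j where "natp (k - pnat j)" by blast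
    then have "natp ((k - pnat j) + pnat j)" by (intro natp_add) simp_all
    then show False using False by simp
  qed
  then show ?thesis by (simp only:) simp
next
  case True
  then obtain K where K: "k = pnat K" using natp_iff by blast
  have "{j::nat \<times> nat. natp (k - pnat j)} \<subseteq> {..fst K} \<times> {..snd K}"
  proof
    fix j assume "j \<in> {j::nat \<times> nat. natp (k - pnat j)}"
    then have "(of_nat (fst K) - of_nat (fst j) :: 'k) \<in> \<nat>" "(of_nat (snd K) - of_nat (snd j) :: 'k) \<in> \<nat>"
      using K by (simp_all add: natp_def)
    then show "j \<in> {..fst K} \<times> {..snd K}" by (simp add: Nats_diff_of_nat mem_Times_iff)
  qed
  then show ?thesis by (rule finite_subset) simp
qed

lemma swap_scalar:
  "(\<Sum>j\<in>{..fst K}\<times>{..snd K}. (-1) ^ (fst j + snd j) * (((fst p + of_nat (fst j)) gchoose fst j) * ((snd p + of_nat (snd j)) gchoose snd j))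
       * DB2 y (pnat K - pnat j))
   = (-1) ^ (fst K + snd K) * DB2 (p + pnat K - y) (pnat K :: 'k::field_char_0 \<times> 'k)"
proof -
  have "(\<Sum>j\<in>{..fst K}\<times>{..snd K}. (-1) ^ (fst j + snd j) * (((fst p + of_nat (fst j)) gchoose fst j) * ((snd p + of_nat (snd j)) gchoose snd j))
       * DB2 y (pnat K - pnat j))
     = (\<Sum>j\<in>{..fst K}\<times>{..snd K}. ((-1) ^ fst j * ((fst p + of_nat (fst j)) gchoose fst j) * (fst y gchoose (fst K - fst j)))
         * ((-1) ^ snd j * ((snd p + of_nat (snd j)) gchoose snd j) * (snd y gchoose (snd K - snd j))))"
  proof (rule sum.cong)
    fix j assume j: "j \<in> {..fst K}\<times>{..snd K}"
    then have "of_nat (fst K) - of_nat (fst j) = (of_nat (fst K - fst j) :: 'k)"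
      "of_nat (snd K) - of_nat (snd j) = (of_nat (snd K - snd j) :: 'k)"
      by (auto simp: of_nat_diff mem_Times_iff)
    then have "DB2 y (pnat K - pnat j) = (fst y gchoose (fst K - fst j)) * (snd y gchoose (snd K - snd j))"
      by (simp add: DB2_def)
    then show "(-1) ^ (fst j + snd j) * (((fst p + of_nat (fst j)) gchoose fst j) * ((snd p + of_nat (snd j)) gchoose snd j))
       * DB2 y (pnat K - pnat j) = ((-1) ^ fst j * ((fst p + of_nat (fst j)) gchoose fst j) * (fst y gchoose (fst K - fst j)))
         * ((-1) ^ snd j * ((snd p + of_nat (snd j)) gchoose snd j) * (snd y gchoose (snd K - snd j)))"
      by (simp add: power_add mult_ac)
  qed simp
  also have "\<dots> = (\<Sum>a\<le>fst K. (-1) ^ a * ((fst p + of_nat a) gchoose a) * (fst y gchoose (fst K - a)))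
     * (\<Sum>b\<le>snd K. (-1) ^ b * ((snd p + of_nat b) gchoose b) * (snd y gchoose (snd K - b)))"
    unfolding sum_product sum.cartesian_product by (rule sum.cong) auto
  also have "\<dots> = (-1) ^ (fst K + snd K) * DB2 (p + pnat K - y) (pnat K)"
    unfolding swap1D by (simp add: DB2_def power_add mult_ac)
  finally show ?thesis .
qed

context kvs
begin

lemma sc_Sum_any: "sc a (Sum_any f) = Sum_any (\<lambda>x. sc a (f x))"
proof (cases "a = 0")
  case True then show ?thesis by simp
next
  case False
  then have "{x. sc a (f x) \<noteq> 0} = {x. f x \<noteq> 0}" by auto
  then show ?thesis by (simp add: Sum_any.expand_set scale_sum_right)
qed

lemma zeta_sq: "zeta_pow pa pb * zeta_pow pa pb = (1::'k)"
  by (simp add: zeta_pow_def)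

lemma linear_scale_comp:
  assumes "Vector_Spaces.linear sc sc f"
  shows "Vector_Spaces.linear sc sc (\<lambda>v. sc k (f v))"
  using assms unfolding Vector_Spaces.linear_iff by (simp add: scale_right_distrib scale_left_commute)

lemma field2_swap:
  assumes "field2 sc c"
  shows "field2 sc (\<lambda>P Q v. sc (kk P Q) (c Q P v))"
  unfolding field2_def
proof (intro conjI allI)
  fix P Q show "Vector_Spaces.linear sc sc (\<lambda>v. sc (kk P Q) (c Q P v))"
    using assms unfolding field2_def by (intro linear_scale_comp) blast
next
  fix v
  obtain S where S: "finite S" "\<forall>p q. c p q v \<noteq> 0 \<longrightarrow> (\<exists>s\<in>S. \<exists>i j::nat\<times>nat. p = padd (fst s) (pnat i) \<and> q = padd (snd s) (pnat j))"
    using assms unfolding field2_def vertex_series2_def by blast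
  show "vertex_series2 (\<lambda>P Q. sc (kk P Q) (c Q P v))"
    unfolding vertex_series2_def
  proof (intro exI conjI allI impI)
    show "finite ((\<lambda>s. (snd s, fst s)) ` S)" using S(1) by simp
    fix p q assume "sc (kk p q) (c q p v) \<noteq> 0"
    then have "c q p v \<noteq> 0" by auto
    then obtain s i j where "s \<in> S" "q = padd (fst s) (pnat i)" "p = padd (snd s) (pnat j)" using S(2) by blast
    then show "\<exists>s\<in>(\<lambda>s. (snd s, fst s)) ` S. \<exists>i j::nat\<times>nat. p = padd (fst s) (pnat i) \<and> q = padd (snd s) (pnat j)"
      by (intro bexI[of _ "(snd s, fst s)"] exI[of _ j] exI[of _ i]) auto
  qed
qed

lemma OPE_swap:
  assumes fI: "finite I" and fld: "\<forall>i\<in>I. field2 sc (c i)"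
    and E2: "\<forall>p q v. sc (zeta_pow pa pb) (b q (a p v)) = (\<Sum>i\<in>I. expand_wz sc (pneg (h i)) (c i) p q v)"
  shows "is_OPE sc b a I h (\<lambda>i P Q v. sc (zeta_pow pa pb * neg1_pow (fst (pneg (h i)) - snd (pneg (h i)))) (c i Q P v))"
  unfolding is_OPE_def
proof (intro conjI ballI allI)
  show "finite I" by fact
  fix i assume "i \<in> I"
  then show "field2 sc (\<lambda>P Q v. sc (zeta_pow pa pb * neg1_pow (fst (pneg (h i)) - snd (pneg (h i)))) (c i Q P v))"
    using fld by (intro field2_swap) blast
next
  fix p q v
  let ?z = "zeta_pow pa pb :: 'k"
  have t: "expand_zw sc (pneg (h i)) (\<lambda>P Q v. sc (?z * neg1_pow (fst (pneg (h i)) - snd (pneg (h i)))) (c i Q P v)) p q v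
      = sc ?z (expand_wz sc (pneg (h i)) (c i) q p v)" for i
    unfolding expand_zw_def expand_wz_def sc_Sum_any
    by (rule Sum_any.cong) (simp add: mult_ac)
  have "(\<Sum>i\<in>I. expand_zw sc (pneg (h i)) (\<lambda>P Q v. sc (?z * neg1_pow (fst (pneg (h i)) - snd (pneg (h i)))) (c i Q P v)) p q v)
      = sc ?z (\<Sum>i\<in>I. expand_wz sc (pneg (h i)) (c i) q p v)"
    unfolding t by (simp add: scale_sum_right)
  also have "\<dots> = sc ?z (sc ?z (b p (a q v)))"
  proof -
    have "sc ?z (b p (a q v)) = (\<Sum>i\<in>I. expand_wz sc (pneg (h i)) (c i) q p v)" using E2 by blast
    then show ?thesis by simp
  qed
  also have "\<dots> = b p (a q v)" by (simp add: zeta_sq)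
  finally show "b p (a q v) = (\<Sum>i\<in>I. expand_zw sc (pneg (h i)) (\<lambda>P Q v. sc (?z * neg1_pow (fst (pneg (h i)) - snd (pneg (h i)))) (c i Q P v)) p q v)"
    by simp
qed

end

lemma grp16: "(h::'a::ab_group_add) - (n + j + o') = h - (n + o') - j" by (simp add: algebra_simps)
lemma grp17: "(p::'a::ab_group_add) + j + (k - j) = p + k" by (simp add: algebra_simps)
lemma grp18: "(h::'a::ab_group_add) - m = k \<Longrightarrow> h = m + k" by (simp add: algebra_simps)
lemma grp19: "(k::'a::ab_group_add) - j + j = k" by simp

context kvs
begin

lemma CF_sumf:
  assumes "fsupp g"
  shows "(\<Sum>j\<in>J. CF (f j) g) = CF (\<lambda>y. \<Sum>j\<in>J. f j y) g"
proof -
  have "(\<Sum>j\<in>J. CF (f j) g) = (\<Sum>j\<in>J. \<Sum>x\<in>{x. g x \<noteq> 0}. sc (f j x) (g x))"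
    using assms by (simp add: CF_expand)
  also have "\<dots> = (\<Sum>x\<in>{x. g x \<noteq> 0}. \<Sum>j\<in>J. sc (f j x) (g x))" by (rule sum.swap)
  also have "\<dots> = CF (\<lambda>y. \<Sum>j\<in>J. f j y) g"
    using assms by (simp add: CF_expand scale_sum_left)
  finally show ?thesis .
qed

lemma swap_i:
  fixes c :: "('k, 'v) fdist2" and h n p m :: "'k \<times> 'k"
  assumes fd: "fsupp (slc c (p + (h - m)) v)" and Kc: "fst n - snd n \<in> \<int>" and mdef: "m = n + (1, 1)"
    and zz: "z * z = 1"
  shows "sc z (Te (h - m) (slc (\<lambda>P Q v. sc (z * neg1_pow (fst (pneg h) - snd (pneg h))) (c Q P v)) (p + (h - m)) v))
   = Sum_any (\<lambda>j. sc (neg1_pow (fst n - snd n) * (-1) ^ (fst j + snd j) * (((fst p + of_nat (fst j)) gchoose fst j) * ((snd p + of_nat (snd j)) gchoose snd j)))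
          (Te (h - m - pnat j) (slc c (p + (h - m)) v)))"
proof -
  define k where "k = h - m"
  define e where "e = p + k"
  define \<delta> where "\<delta> = slc c e v"
  define \<nu> where "\<nu> = neg1_pow (fst (pneg h) - snd (pneg h))"
  define \<nu>n where "\<nu>n = neg1_pow (fst n - snd n)"
  define w where "w = (\<lambda>j::nat\<times>nat. \<nu>n * (-1) ^ (fst j + snd j) * (((fst p + of_nat (fst j)) gchoose fst j) * ((snd p + of_nat (snd j)) gchoose snd j)))"
  define f0 where "f0 = (\<lambda>y. DB2 (e - y) k)"
  have fd': "fsupp \<delta>" using fd unfolding \<delta>_def e_def k_def .
  have s1: "slc (\<lambda>P Q v. sc (z * \<nu>) (c Q P v)) e v = (\<lambda>x. sc (z * \<nu>) (\<delta> (e - x)))"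
    unfolding slc_def \<delta>_def grp_cancel1 ..
  have s2: "Te k (\<lambda>x. sc (z * \<nu>) (\<delta> (e - x))) = sc (z * \<nu>) (CF f0 \<delta>)"
  proof -
    have "Te k (\<lambda>x. sc (z * \<nu>) (\<delta> (e - x))) = Sum_any (\<lambda>y. sc (DB2 (e - y) k) (sc (z * \<nu>) (\<delta> (e - (e - y)))))"
      unfolding Te_def
    proof (rule SA_reindex)
      show "inj (\<lambda>y. e - y)" by (rule injI) simp
      show "{x. sc (DB2 x k) (sc (z * \<nu>) (\<delta> (e - x))) \<noteq> 0} \<subseteq> range (\<lambda>y. e - y)"
        by (auto intro: image_eqI[of _ _ "e - _"])
    qed
    also have "\<dots> = Sum_any (\<lambda>y. sc (z * \<nu>) (sc (f0 y) (\<delta> y)))"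
      unfolding grp_cancel1 f0_def by (simp add: mult.commute)
    also have "\<dots> = sc (z * \<nu>) (CF f0 \<delta>)" unfolding CF_def sc_Sum_any ..
    finally show ?thesis .
  qed
  have LHS: "sc z (Te (h - m) (slc (\<lambda>P Q v. sc (z * \<nu>) (c Q P v)) (p + (h - m)) v)) = sc \<nu> (CF f0 \<delta>)"
    unfolding k_def[symmetric] e_def[symmetric] s1 s2 using zz by (simp add: mult.assoc[symmetric])
  show ?thesis
  proof (cases "natp k")
    case False
    have "f0 y = 0" for y unfolding f0_def using DB2_nz False by blast
    then have l0: "CF f0 \<delta> = 0" unfolding CF_def by simp
    have "Te (k - pnat j) \<delta> = 0" for j
    proof (rule Te_notnat)
      show "\<not> natp (k - pnat j)"
      proof
        assume "natp (k - pnat j)"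
        then have "natp (k - pnat j + pnat j)" by (intro natp_add) simp_all
        then show False using False by simp
      qed
    qed
    then show ?thesis using LHS l0 unfolding \<nu>_def k_def e_def \<delta>_def \<nu>n_def by simp
  next
    case True
    then obtain K where K: "k = pnat K" using natp_iff by blast
    have hK: "h = n + (1, 1) + pnat K" using grp18[OF k_def[symmetric, unfolded K]] mdef by simp
    have nu: "\<nu> = \<nu>n * (-1) ^ (fst K + snd K)" unfolding \<nu>_def \<nu>n_def using neg1_rel[OF Kc hK] .
    let ?B = "{..fst K} \<times> {..snd K}"
    have "Sum_any (\<lambda>j. sc (w j) (Te (k - pnat j) \<delta>)) = (\<Sum>j\<in>?B. sc (w j) (Te (k - pnat j) \<delta>))"
    proof (rule Sum_any.expand_superset)
      show "{a. sc (w a) (Te (k - pnat a) \<delta>) \<noteq> 0} \<subseteq> ?B"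
      proof
        fix j assume "j \<in> {a. sc (w a) (Te (k - pnat a) \<delta>) \<noteq> 0}"
        then have "Te (k - pnat j) \<delta> \<noteq> 0" by auto
        then have "natp (k - pnat j)" using Te_notnat by blast
        then have "(of_nat (fst K) - of_nat (fst j) :: 'k) \<in> \<nat>" "(of_nat (snd K) - of_nat (snd j) :: 'k) \<in> \<nat>"
          using K by (simp_all add: natp_def)
        then show "j \<in> ?B" by (simp add: Nats_diff_of_nat mem_Times_iff)
      qed
    qed simp
    also have "\<dots> = (\<Sum>j\<in>?B. CF (\<lambda>y. w j * DB2 y (k - pnat j)) \<delta>)"
      unfolding Te_CF using fd' by (simp add: CF_scale)
    also have "\<dots> = CF (\<lambda>y. \<Sum>j\<in>?B. w j * DB2 y (k - pnat j)) \<delta>" by (rule CF_sumf[OF fd'])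
    also have "\<dots> = CF (\<lambda>y. \<nu> * f0 y) \<delta>"
    proof (rule CF_cong)
      fix y
      have "(\<Sum>j\<in>?B. w j * DB2 y (k - pnat j)) = \<nu>n * (\<Sum>j\<in>?B. (-1) ^ (fst j + snd j) * (((fst p + of_nat (fst j)) gchoose fst j) * ((snd p + of_nat (snd j)) gchoose snd j)) * DB2 y (pnat K - pnat j))"
        unfolding w_def K by (simp add: sum_distrib_left mult.assoc)
      also have "\<dots> = \<nu>n * ((-1) ^ (fst K + snd K) * DB2 (p + pnat K - y) (pnat K))"
        unfolding swap_scalar ..
      also have "\<dots> = \<nu> * f0 y" unfolding nu f0_def e_def K by simp
      finally show "(\<Sum>j\<in>?B. w j * DB2 y (k - pnat j)) = \<nu> * f0 y" .
    qed
    also have "\<dots> = sc \<nu> (CF f0 \<delta>)" using fd' by (simp add: CF_scale)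
    finally have R: "Sum_any (\<lambda>j. sc (w j) (Te (k - pnat j) \<delta>)) = sc \<nu> (CF f0 \<delta>)" .
    show ?thesis using LHS R unfolding w_def \<nu>_def k_def e_def \<delta>_def \<nu>n_def by simp
  qed
qed

end

lemma ddiv_of_nat: "ddiv (of_nat j) x = ((x + of_nat j) gchoose j :: 'k::field_char_0)"
  by (simp add: ddiv_def)

theorem mainTheorem14:
  fixes sc :: "'k::field_char_0 \<Rightarrow> 'v::ab_group_add \<Rightarrow> 'v"
    and V0 V1 :: "'v set" and pa pb :: bool
    and a b :: "('k, 'v) fdist1" and n :: "'k \<times> 'k"
  assumes "super_vs sc V0 V1"
    and "field1 sc a" and "field1 sc b"
    and "homogeneous V0 V1 pa a" and "homogeneous V0 V1 pb b"
    and "mutually_local sc pa pb a b"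
    and "n \<in> Kcheck"
  shows "finite {i::nat \<times> nat. deriv1 sc (pnat i) (nprod sc a (padd n (pnat i)) b) \<noteq> (\<lambda>_ _. 0)}
    \<and> (\<forall>p v. sc (zeta_pow pa pb) (nprod sc b n a p v)
          = Sum_any (\<lambda>i::nat \<times> nat.
              sc (neg1_pow (fst n - snd n) * (-1) ^ (fst i + snd i))
                 (deriv1 sc (pnat i) (nprod sc a (padd n (pnat i)) b) p v)))"
proof -
  have vs: "vector_space sc" using assms(1) unfolding super_vs_def by blast
  interpret kvs sc using vs by (simp add: kvs_def)
  obtain I :: "nat set" and h c where fI: "finite I" and fld0: "\<forall>i\<in>I. field2 sc (c i) \<and> h i \<in> Kcheck"
    and E1: "\<forall>p q v. a p (b q v) = (\<Sum>i\<in>I. expand_zw sc (pneg (h i)) (c i) p q v)"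
    and E2: "\<forall>p q v. sc (zeta_pow pa pb) (b q (a p v)) = (\<Sum>i\<in>I. expand_wz sc (pneg (h i)) (c i) p q v)"
    using assms(6) unfolding mutually_local_def by blast
  have fld: "\<forall>i\<in>I. field2 sc (c i)" using fld0 by blast
  let ?z = "zeta_pow pa pb :: 'k"
  define c' where "c' = (\<lambda>i P Q v. sc (?z * neg1_pow (fst (pneg (h i)) - snd (pneg (h i)))) (c i Q P v))"
  have O1: "is_OPE sc a b I h c" unfolding is_OPE_def using fI fld E1 by blast
  have O2: "is_OPE sc b a I h c'" unfolding c'_def by (rule OPE_swap[OF fI fld E2])
  define m where "m = n + (1, 1)"
  have Kc: "fst n - snd n \<in> \<int>" using assms(7) unfolding Kcheck_def by simp
  have NP1: "nprod sc a (padd n (pnat j)) b = (\<lambda>q v. \<Sum>i\<in>I. Te (h i - m - pnat j) (slc (c i) (q + (h i - m - pnat j)) v))" for j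
    unfolding nprod_eq[OF O1] psub_psub_11 diag_Te m_def padd_eq grp16 ..
  have NP2: "nprod sc b n a = (\<lambda>q v. \<Sum>i\<in>I. Te (h i - m) (slc (c' i) (q + (h i - m)) v))"
    unfolding nprod_eq[OF O2] psub_psub_11 diag_Te m_def ..
  have fsl: "fsupp (slc (c i) e v)" if "i \<in> I" for i e v using fld that field2_fsupp by blast
  have finU: "finite (\<Union>i\<in>I. {j::nat\<times>nat. natp (h i - m - pnat j)})"
    using fI finite_natp_minus by blast
  have sub: "{j::nat \<times> nat. deriv1 sc (pnat j) (nprod sc a (padd n (pnat j)) b) \<noteq> (\<lambda>_ _. 0)}
      \<subseteq> (\<Union>i\<in>I. {j. natp (h i - m - pnat j)})"
  proof
    fix j assume j: "j \<in> {j::nat \<times> nat. deriv1 sc (pnat j) (nprod sc a (padd n (pnat j)) b) \<noteq> (\<lambda>_ _. 0)}"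
    show "j \<in> (\<Union>i\<in>I. {j. natp (h i - m - pnat j)})"
    proof (rule ccontr)
      assume "j \<notin> (\<Union>i\<in>I. {j. natp (h i - m - pnat j)})"
      then have nn: "\<forall>i\<in>I. \<not> natp (h i - m - pnat j)" by blast
      have "nprod sc a (padd n (pnat j)) b = (\<lambda>q v. 0)"
        unfolding NP1 using nn by (simp add: Te_notnat)
      then have "deriv1 sc (pnat j) (nprod sc a (padd n (pnat j)) b) = (\<lambda>_ _. 0)"
        by (simp add: deriv1_def)
      then show False using j by simp
    qed
  qed
  have part1: "finite {j::nat \<times> nat. deriv1 sc (pnat j) (nprod sc a (padd n (pnat j)) b) \<noteq> (\<lambda>_ _. 0)}"
    using finite_subset[OF sub finU] .
  have part2: "sc ?z (nprod sc b n a p v)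
          = Sum_any (\<lambda>j::nat \<times> nat.
              sc (neg1_pow (fst n - snd n) * (-1) ^ (fst j + snd j))
                 (deriv1 sc (pnat j) (nprod sc a (padd n (pnat j)) b) p v))" for p v
  proof -
    define T where "T = (\<lambda>i (j::nat\<times>nat). sc (neg1_pow (fst n - snd n) * (-1) ^ (fst j + snd j) * (((fst p + of_nat (fst j)) gchoose fst j) * ((snd p + of_nat (snd j)) gchoose snd j)))
          (Te (h i - m - pnat j) (slc (c i) (p + (h i - m)) v)))"
    have "sc ?z (nprod sc b n a p v) = (\<Sum>i\<in>I. sc ?z (Te (h i - m) (slc (c' i) (p + (h i - m)) v)))"
      unfolding NP2 by (simp add: scale_sum_right)
    also have "\<dots> = (\<Sum>i\<in>I. Sum_any (T i))"
    proof (rule sum.cong)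
      fix i assume i: "i \<in> I"
      show "sc ?z (Te (h i - m) (slc (c' i) (p + (h i - m)) v)) = Sum_any (T i)"
        unfolding T_def c'_def by (rule swap_i[OF fsl[OF i] Kc m_def zeta_sq])
    qed simp
    also have "\<dots> = Sum_any (\<lambda>j. \<Sum>i\<in>I. T i j)"
    proof (rule sum_Sum_any_swap[symmetric, OF fI], intro ballI)
      fix i assume "i \<in> I"
      have "{j. T i j \<noteq> 0} \<subseteq> {j. natp (h i - m - pnat j)}"
        unfolding T_def using Te_notnat by fastforce
      then show "finite {j. T i j \<noteq> 0}" using finite_natp_minus by (rule finite_subset)
    qed
    also have "\<dots> = Sum_any (\<lambda>j::nat \<times> nat.
              sc (neg1_pow (fst n - snd n) * (-1) ^ (fst j + snd j))
                 (deriv1 sc (pnat j) (nprod sc a (padd n (pnat j)) b) p v))"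
    proof (rule Sum_any.cong)
      fix j :: "nat \<times> nat"
      have "deriv1 sc (pnat j) (nprod sc a (padd n (pnat j)) b) p v
          = sc (((fst p + of_nat (fst j)) gchoose fst j) * ((snd p + of_nat (snd j)) gchoose snd j))
               (\<Sum>i\<in>I. Te (h i - m - pnat j) (slc (c i) (p + (h i - m)) v))"
      proof -
        have e1: "nprod sc a (padd n (pnat j)) b (padd p (pnat j)) v = (\<Sum>i\<in>I. Te (h i - m - pnat j) (slc (c i) (p + (h i - m)) v))"
          apply (subst NP1)
          apply (simp only: padd_eq grp17)
          done
        show ?thesis unfolding deriv1_def e1 by (simp add: ddiv_of_nat)
      qed
      then show "(\<Sum>i\<in>I. T i j) = sc (neg1_pow (fst n - snd n) * (-1) ^ (fst j + snd j))
                 (deriv1 sc (pnat j) (nprod sc a (padd n (pnat j)) b) p v)"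
        unfolding T_def by (simp add: scale_sum_right mult.assoc)
    qed
    finally show ?thesis .
  qed
  show ?thesis using part1 part2 by blast
qed

end
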